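(* Let $n\ge1$, $\nu\ge1$ be integers and $\delta\in\{0,1,2\}$. The graph $\mathcal{O}^{(2\nu+\delta)}_{2^n}$ is $2^{n(2\nu+\delta-2)}$-regular on $2^{(n-1)(2\nu+\delta-2)}(2^\nu-1)(2^{\nu+\delta-1}+1)$ vertices. Moreover: (1) If $\nu=1$, then it is a strongly regular graph in which every pair of adjacent vertices has $\lambda=2^{\delta n}-2^{\delta(n-1)}$ common neighbours and every pair of non-adjacent vertices has $\mu=\lceil\delta/2\rceil 2^{\delta n}$ common neighbours. (2) If $\nu\ge2$, then it is a quasi-strongly regular graph in which every pair of adjacent vertices has $\lambda=2^{n-1}\big(2^{n(\nu+\frac{\delta}{2}-1)}+(\delta-1)2^{(n-1)(\nu+\frac{\delta}{2}-1)}\big)2^{n(\nu-2+\frac{\delta}{2})}$ common neighbours and every pair of non-adjacent vertices has either $c_1=2^{n-1}2^{n(2\nu-3+\delta)}$ or $c_2=2^{n(2\nu-2+\delta)}$ common neighbours.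
   Context: Let $V^{2\nu+\delta}$ be the set of tuples $\vec a=(a_1,\ldots,a_{2\nu+\delta})\in(\mathbb{Z}_{2^n})^{2\nu+\delta}$ such that some $a_i$ is a unit of $\mathbb{Z}_{2^n}$. Write $\vec a\sim\vec b$ if $\vec a=\lambda\vec b$ for some $\lambda\in\mathbb{Z}_{2^n}^\times$, let $[\vec a]$ denote the equivalence class and $V^{2\nu+\delta}_\sim$ the set of classes. Let $G_{2\nu+\delta,\Delta}=\begin{pmatrix}0&I_\nu&\\ &0&\\ &&\Delta\end{pmatrix}$ over $\mathbb{Z}_{2^n}$ (first two block sizes $\nu$, unspecified blocks zero), where $\Delta$ is empty if $\delta=0$, $\Delta=(1)$ if $\delta=1$, and $\Delta=\begin{pmatrix}z&1\\0&z\end{pmatrix}$ if $\delta=2$, with $z$ a fixed unit of $\mathbb{Z}_{2^n}$. The orthogonal graph $\mathcal{O}^{(2\nu+\delta)}_{2^n}$ has vertex set $\{[\vec a]\in V^{2\nu+\delta}_\sim:\vec a\,G_{2\nu+\delta,\Delta}\,\vec a^t=0\}$, with $[\vec a]$ adjacent to $[\vec b]$ iff $\vec a(G_{2\nu+\delta,\Delta}+G_{2\nu+\delta,\Delta}^t)\vec b^t\in\mathbb{Z}_{2^n}^\times$. A quasi-strongly regular graph with parameters $(v,k,\lambda,\{c_1,\ldots,c_d\})$ is a $k$-regular graph on $v$ vertices in which every pair of adjacent vertices has $\lambda$ common neighbours and every pair of non-adjacent vertices has one of $c_1,\ldots,c_d$ common neighbours, for some $d\ge2$. *)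

theory Defs
  imports Complex_Main
begin

text \<open>The ring Z_q (q = 2^n) is modelled by the integers 0..q-1 with arithmetic mod q.\<close>

definition zunit :: "int \<Rightarrow> int \<Rightarrow> bool" where
  "zunit q a \<longleftrightarrow> (\<exists>b. (a * b) mod q = 1 mod q)"

definition Vtuples :: "nat \<Rightarrow> int \<Rightarrow> int list set" where
  "Vtuples m q = {xs. length xs = m \<and> set xs \<subseteq> {0..<q} \<and> (\<exists>i<m. zunit q (xs ! i))}"

definition scale :: "int \<Rightarrow> int \<Rightarrow> int list \<Rightarrow> int list" where
  "scale q l xs = map (\<lambda>x. (l * x) mod q) xs"

definition cls :: "int \<Rightarrow> int list \<Rightarrow> int list set" where
  "cls q xs = {scale q l xs | l. l \<in> {0..<q} \<and> zunit q l}"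

text \<open>The matrix G_{2nu+delta,Delta} (indices from 0), with z the fixed unit.\<close>
definition Gmat :: "nat \<Rightarrow> nat \<Rightarrow> int \<Rightarrow> nat \<Rightarrow> nat \<Rightarrow> int" where
  "Gmat \<nu> \<delta> z i j =
     (if i < \<nu> \<and> j = i + \<nu> then 1
      else if \<delta> = 1 \<and> i = 2*\<nu> \<and> j = 2*\<nu> then 1
      else if \<delta> = 2 \<and> i = 2*\<nu> \<and> j = 2*\<nu> then z
      else if \<delta> = 2 \<and> i = 2*\<nu> \<and> j = 2*\<nu>+1 then 1
      else if \<delta> = 2 \<and> i = 2*\<nu>+1 \<and> j = 2*\<nu>+1 then z
      else 0)"

definition bform :: "nat \<Rightarrow> (nat \<Rightarrow> nat \<Rightarrow> int) \<Rightarrow> int list \<Rightarrow> int list \<Rightarrow> int" where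
  "bform m M a b = (\<Sum>i<m. \<Sum>j<m. a ! i * M i j * b ! j)"

definition Overts :: "nat \<Rightarrow> nat \<Rightarrow> nat \<Rightarrow> int \<Rightarrow> int list set set" where
  "Overts n \<nu> \<delta> z =
     {cls (2^n) a | a. a \<in> Vtuples (2*\<nu>+\<delta>) (2^n)
        \<and> bform (2*\<nu>+\<delta>) (Gmat \<nu> \<delta> z) a a mod 2^n = 0}"

definition Oadj :: "nat \<Rightarrow> nat \<Rightarrow> nat \<Rightarrow> int \<Rightarrow> int list set \<Rightarrow> int list set \<Rightarrow> bool" where
  "Oadj n \<nu> \<delta> z A B \<longleftrightarrow>
     (\<exists>a\<in>A. \<exists>b\<in>B. zunit (2^n)
        (bform (2*\<nu>+\<delta>) (\<lambda>i j. Gmat \<nu> \<delta> z i j + Gmat \<nu> \<delta> z j i) a b))"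

definition common_nbrs :: "'a set \<Rightarrow> ('a \<Rightarrow> 'a \<Rightarrow> bool) \<Rightarrow> 'a \<Rightarrow> 'a \<Rightarrow> nat" where
  "common_nbrs V adj u v = card {w \<in> V. adj u w \<and> adj v w}"

definition regular_graph :: "'a set \<Rightarrow> ('a \<Rightarrow> 'a \<Rightarrow> bool) \<Rightarrow> real \<Rightarrow> real \<Rightarrow> bool" where
  "regular_graph V adj v k \<longleftrightarrow>
     finite V \<and> real (card V) = v
     \<and> (\<forall>x\<in>V. \<forall>y\<in>V. adj x y = adj y x) \<and> (\<forall>x\<in>V. \<not> adj x x)
     \<and> (\<forall>x\<in>V. real (card {w \<in> V. adj x w}) = k)"

definition strongly_regular :: "'a set \<Rightarrow> ('a \<Rightarrow> 'a \<Rightarrow> bool) \<Rightarrow> real \<Rightarrow> real \<Rightarrow> real \<Rightarrow> real \<Rightarrow> bool" where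
  "strongly_regular V adj v k l mu \<longleftrightarrow>
     regular_graph V adj v k
     \<and> (\<forall>x\<in>V. \<forall>y\<in>V. adj x y \<longrightarrow> real (common_nbrs V adj x y) = l)
     \<and> (\<forall>x\<in>V. \<forall>y\<in>V. x \<noteq> y \<and> \<not> adj x y \<longrightarrow> real (common_nbrs V adj x y) = mu)"

definition quasi_strongly_regular :: "'a set \<Rightarrow> ('a \<Rightarrow> 'a \<Rightarrow> bool) \<Rightarrow> real \<Rightarrow> real \<Rightarrow> real \<Rightarrow> real set \<Rightarrow> bool" where
  "quasi_strongly_regular V adj v k l C \<longleftrightarrow>
     regular_graph V adj v k \<and> finite C \<and> card C \<ge> 2
     \<and> (\<forall>x\<in>V. \<forall>y\<in>V. adj x y \<longrightarrow> real (common_nbrs V adj x y) = l)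
     \<and> (\<forall>x\<in>V. \<forall>y\<in>V. x \<noteq> y \<and> \<not> adj x y \<longrightarrow> real (common_nbrs V adj x y) \<in> C)"

end

theory Submission
  imports Defs
begin

locale og =
  fixes n \<nu> \<delta> :: nat and z :: int
  assumes n1: "n \<ge> 1" and nu1: "\<nu> \<ge> 1" and d2: "\<delta> \<le> 2" and zodd: "odd z"
begin

abbreviation "m \<equiv> 2*\<nu>+\<delta>"
abbreviation "G \<equiv> Gmat \<nu> \<delta> z"

definition Dg :: "int list \<Rightarrow> int list \<Rightarrow> int" where
  "Dg x y = (if \<delta> = 1 then x!(2*\<nu>)*y!(2*\<nu>)
     else if \<delta> = 2 then z*x!(2*\<nu>)*y!(2*\<nu>) + x!(2*\<nu>)*y!(2*\<nu>+1) + z*x!(2*\<nu>+1)*y!(2*\<nu>+1)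
     else 0)"

definition rowv :: "nat \<Rightarrow> int list \<Rightarrow> int" where
  "rowv i y = (if i < \<nu> then y!(i+\<nu>) else if \<delta> = 1 \<and> i = 2*\<nu> then y!(2*\<nu>)
      else if \<delta> = 2 \<and> i = 2*\<nu> then z*y!(2*\<nu>)+y!(2*\<nu>+1)
      else if \<delta> = 2 \<and> i = 2*\<nu>+1 then z*y!(2*\<nu>+1) else 0)"

lemma row: assumes "i < m"
  shows "(\<Sum>j<m. x!i * G i j * y!j) = x!i * rowv i y"
proof -
  have "(\<Sum>j<m. x!i * G i j * y!j) = (\<Sum>j<m. x!i * (G i j * y!j))"
    by (simp add: mult.assoc)
  also have "\<dots> = x!i * (\<Sum>j<m. G i j * y!j)" by (simp add: sum_distrib_left)
  also have "(\<Sum>j<m. G i j * y!j) = rowv i y"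
  proof -
    consider "i < \<nu>" | "\<nu> \<le> i \<and> i < 2*\<nu>" | "i = 2*\<nu>" | "i = 2*\<nu>+1" using assms d2 by linarith
    then show ?thesis
    proof cases
      case 1
      hence "G i j * y!j = (if j = i+\<nu> then y!j else 0)" for j by (simp add: Gmat_def)
      then show ?thesis using 1 by (simp add: rowv_def sum.delta)
    next
      case 2
      have h: "G i j * y!j = 0" for j using 2 by (simp add: Gmat_def)
      show ?thesis using 2 by (simp add: rowv_def h)
    next
      case 3
      hence "G i j * y!j = (if \<delta> = 1 \<and> j = 2*\<nu> then y!j else 0) + (if \<delta> = 2 \<and> j = 2*\<nu> then z * y!j else 0)
         + (if \<delta> = 2 \<and> j = 2*\<nu>+1 then y!j else 0)" for j using nu1 by (simp add: Gmat_def)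
      then show ?thesis using 3 assms nu1 d2 by (simp add: rowv_def sum.distrib sum.delta)
    next
      case 4
      hence "G i j * y!j = (if \<delta> = 2 \<and> j = 2*\<nu>+1 then z * y!j else 0)" for j using nu1 by (simp add: Gmat_def)
      then show ?thesis using 4 assms nu1 d2 by (simp add: rowv_def sum.delta)
    qed
  qed
  finally show ?thesis .
qed

lemma bform_G: "bform m G x y = (\<Sum>i<\<nu>. x!i * y!(i+\<nu>)) + Dg x y"
proof -
  have "bform m G x y = (\<Sum>i<m. x!i * rowv i y)"
    unfolding bform_def by (rule sum.cong) (auto simp: row)
  also have "{..<m} = {..<\<nu>} \<union> ({\<nu>..<2*\<nu>} \<union> {2*\<nu>..<m})" by auto
  also have "(\<Sum>i\<in>{..<\<nu>} \<union> ({\<nu>..<2*\<nu>} \<union> {2*\<nu>..<m}). x!i * rowv i y)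
     = (\<Sum>i<\<nu>. x!i * rowv i y) + ((\<Sum>i\<in>{\<nu>..<2*\<nu>}. x!i * rowv i y) + (\<Sum>i\<in>{2*\<nu>..<m}. x!i * rowv i y))"
    by (subst sum.union_disjoint, auto, subst sum.union_disjoint, auto)
  also have "(\<Sum>i<\<nu>. x!i * rowv i y) = (\<Sum>i<\<nu>. x!i * y!(i+\<nu>))"
    by (rule sum.cong) (auto simp: rowv_def)
  also have "(\<Sum>i\<in>{\<nu>..<2*\<nu>}. x!i * rowv i y) = 0"
    by (rule sum.neutral) (auto simp: rowv_def)
  also have "(\<Sum>i\<in>{2*\<nu>..<m}. x!i * rowv i y) = Dg x y"
  proof -
    have "\<delta> = 0 \<or> \<delta> = 1 \<or> \<delta> = 2" using d2 by auto
    moreover have "{2*\<nu>..<2*\<nu>+1} = {2*\<nu>}" by auto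
    moreover have "{2*\<nu>..<2*\<nu>+2} = {2*\<nu>, 2*\<nu>+1}" by auto
    ultimately show ?thesis using nu1 by (auto simp: rowv_def Dg_def algebra_simps)
  qed
  finally show ?thesis by simp
qed

end

lemma card_lists_prod:
  "card {xs. length xs = k \<and> (\<forall>j<k. xs!j \<in> S j)} = (\<Prod>j<k. card (S j))"
proof (induction k arbitrary: S)
  case 0
  then show ?case by simp
next
  case (Suc k)
  have eq: "{xs. length xs = Suc k \<and> (\<forall>j<Suc k. xs!j \<in> S j)}
     = (\<lambda>(a,xs). a#xs) ` (S 0 \<times> {xs. length xs = k \<and> (\<forall>j<k. xs!j \<in> S (Suc j))})"
  proof (rule set_eqI, rule iffI)
    fix xs assume "xs \<in> {xs. length xs = Suc k \<and> (\<forall>j<Suc k. xs!j \<in> S j)}"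
    then obtain a ys where "xs = a#ys" "length ys = k" "\<forall>j<Suc k. xs!j \<in> S j"
      by (cases xs) auto
    then show "xs \<in> (\<lambda>(a,xs). a#xs) ` (S 0 \<times> {xs. length xs = k \<and> (\<forall>j<k. xs!j \<in> S (Suc j))})"
      by (auto intro!: image_eqI[of _ _ "(a,ys)"])
  next
    fix xs assume "xs \<in> (\<lambda>(a,xs). a#xs) ` (S 0 \<times> {xs. length xs = k \<and> (\<forall>j<k. xs!j \<in> S (Suc j))})"
    then show "xs \<in> {xs. length xs = Suc k \<and> (\<forall>j<Suc k. xs!j \<in> S j)}"
      by (auto simp: less_Suc_eq_0_disj)
  qed
  have inj: "inj_on (\<lambda>(a,xs). a#xs) X" for X :: "('a \<times> 'a list) set"
    by (auto simp: inj_on_def)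
  show ?case unfolding eq card_image[OF inj] card_cartesian_product Suc.IH prod.lessThan_Suc_shift ..
qed

lemma card_lists_const:
  "card {xs. length xs = k \<and> set xs \<subseteq> A} = card A ^ k"
proof -
  have "{xs. length xs = k \<and> set xs \<subseteq> A} = {xs. length xs = k \<and> (\<forall>j<k. xs!j \<in> A)}"
    by (auto simp: set_conv_nth)
  then show ?thesis using card_lists_prod[of k "\<lambda>_. A"] by simp
qed

definition chi :: "int \<Rightarrow> int" where "chi t = (if even t then 1 else -1)"

lemma chi_add: "chi (a+b) = chi a * chi b" by (auto simp: chi_def)
lemma chi_cong: "a mod 2 = b mod 2 \<Longrightarrow> chi a = chi b"
  by (auto simp: chi_def even_iff_mod_2_eq_zero)
lemma chi_sq: "chi a * chi a = 1" by (auto simp: chi_def)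

lemma bform_cong:
  assumes "\<forall>i<k. x!i mod d = x'!i mod d" "\<forall>i<k. y!i mod d = y'!i mod d"
  shows "bform k M x y mod d = bform k M x' y' mod d"
proof -
  have "bform k M x y mod d = (\<Sum>i<k. (\<Sum>j<k. (x!i * M i j * y!j) mod d) mod d) mod d"
    unfolding bform_def by (simp add: mod_sum_eq)
  also have "\<dots> = (\<Sum>i<k. (\<Sum>j<k. (x'!i * M i j * y'!j) mod d) mod d) mod d"
  proof -
    have "(x!i * M i j * y!j) mod d = (x'!i * M i j * y'!j) mod d" if "i<k" "j<k" for i j
      using assms that by (intro mod_mult_cong) auto
    then show ?thesis by (auto intro!: sum.cong arg_cong[where f="\<lambda>t. t mod d"])
  qed
  also have "\<dots> = bform k M x' y' mod d"
    unfolding bform_def by (simp add: mod_sum_eq)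
  finally show ?thesis .
qed

context og
begin

definition Q :: "int list \<Rightarrow> int" where "Q x = bform m G x x"
definition Bs :: "int list \<Rightarrow> int list \<Rightarrow> int" where
  "Bs x y = bform m (\<lambda>i j. G i j + G j i) x y"

lemma Bs_split: "Bs x y = bform m G x y + bform m G y x"
proof -
  have "Bs x y = (\<Sum>i<m. \<Sum>j<m. x!i * G i j * y!j) + (\<Sum>i<m. \<Sum>j<m. x!i * G j i * y!j)"
    unfolding Bs_def bform_def by (simp add: algebra_simps sum.distrib)
  also have "(\<Sum>i<m. \<Sum>j<m. x!i * G j i * y!j) = (\<Sum>j<m. \<Sum>i<m. x!i * G j i * y!j)"
    by (rule sum.swap)
  also have "\<dots> = bform m G y x" unfolding bform_def
    by (simp add: algebra_simps)
  finally show ?thesis unfolding bform_def .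
qed

lemma Q_expl: "Q x = (\<Sum>i<\<nu>. x!i * x!(i+\<nu>)) + Dg x x"
  unfolding Q_def bform_G ..

lemma Bs_expl: "Bs x y = (\<Sum>i<\<nu>. x!i * y!(i+\<nu>) + y!i * x!(i+\<nu>)) + Dg x y + Dg y x"
  unfolding Bs_split bform_G by (simp add: sum.distrib)

lemma Bs_sym: "Bs x y = Bs y x" unfolding Bs_split by simp

definition vadd :: "int list \<Rightarrow> int list \<Rightarrow> int list" where
  "vadd x y = map2 (+) x y"
definition smul :: "int \<Rightarrow> int list \<Rightarrow> int list" where
  "smul c x = map ((*) c) x"

lemma vadd_nth: "i < length x \<Longrightarrow> i < length y \<Longrightarrow> vadd x y ! i = x!i + y!i"
  by (simp add: vadd_def)
lemma vadd_len[simp]: "length (vadd x y) = min (length x) (length y)"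
  by (simp add: vadd_def)
lemma smul_len[simp]: "length (smul c x) = length x" by (simp add: smul_def)
lemma smul_nth: "i < length x \<Longrightarrow> smul c x ! i = c * x!i" by (simp add: smul_def)

lemma Dg_add:
  assumes "length x = m" "length y = m" "length w = m"
  shows "Dg (vadd x y) w = Dg x w + Dg y w" "Dg w (vadd x y) = Dg w x + Dg w y"
  using assms d2 by (auto simp: Dg_def vadd_nth algebra_simps)

lemma Dg_smul:
  assumes "length x = m" "length w = m"
  shows "Dg (smul c x) w = c * Dg x w" "Dg w (smul c x) = c * Dg w x"
  using assms d2 by (auto simp: Dg_def smul_nth algebra_simps)

lemma Q_add:
  assumes "length x = m" "length y = m"
  shows "Q (vadd x y) = Q x + Q y + Bs x y"
proof -
  have "(\<Sum>i<\<nu>. vadd x y!i * vadd x y!(i+\<nu>)) = (\<Sum>i<\<nu>. x!i * x!(i+\<nu>) + y!i * y!(i+\<nu>) + (x!i * y!(i+\<nu>) + y!i * x!(i+\<nu>)))"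
    using assms by (intro sum.cong) (auto simp: vadd_nth algebra_simps)
  moreover have "Dg (vadd x y) (vadd x y) = Dg x x + Dg y y + Dg x y + Dg y x"
    using assms by (simp add: Dg_add)
  ultimately show ?thesis unfolding Q_expl Bs_expl by (simp add: sum.distrib)
qed

lemma Bs_add2:
  assumes "length x = m" "length y = m" "length w = m"
  shows "Bs w (vadd x y) = Bs w x + Bs w y"
proof -
  have "(\<Sum>i<\<nu>. w!i * vadd x y!(i+\<nu>) + vadd x y!i * w!(i+\<nu>)) = (\<Sum>i<\<nu>. w!i * x!(i+\<nu>) + x!i * w!(i+\<nu>)) + (\<Sum>i<\<nu>. w!i * y!(i+\<nu>) + y!i * w!(i+\<nu>))"
    using assms by (auto simp: vadd_nth algebra_simps sum.distrib[symmetric] intro!: sum.cong)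
  then show ?thesis unfolding Bs_expl using assms by (simp add: Dg_add)
qed

lemma Q_smul:
  assumes "length x = m"
  shows "Q (smul c x) = c^2 * Q x"
proof -
  have "(\<Sum>i<\<nu>. smul c x!i * smul c x!(i+\<nu>)) = c^2 * (\<Sum>i<\<nu>. x!i * x!(i+\<nu>))"
    using assms by (auto simp: smul_nth sum_distrib_left power2_eq_square algebra_simps intro!: sum.cong)
  then show ?thesis unfolding Q_expl using assms by (simp add: Dg_smul algebra_simps power2_eq_square)
qed

lemma Bs_smul2:
  assumes "length x = m" "length w = m"
  shows "Bs w (smul c x) = c * Bs w x"
proof -
  have "(\<Sum>i<\<nu>. w!i * smul c x!(i+\<nu>) + smul c x!i * w!(i+\<nu>)) = c * (\<Sum>i<\<nu>. w!i * x!(i+\<nu>) + x!i * w!(i+\<nu>))"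
    using assms by (auto simp: smul_nth sum_distrib_left algebra_simps intro!: sum.cong)
  then show ?thesis unfolding Bs_expl using assms by (simp add: Dg_smul algebra_simps)
qed

lemma Q_cong:
  assumes "\<forall>i<m. x!i mod d = x'!i mod d"
  shows "Q x mod d = Q x' mod d"
  unfolding Q_def by (rule bform_cong) (use assms in auto)

lemma Bs_cong:
  assumes "\<forall>i<m. x!i mod d = x'!i mod d" "\<forall>i<m. y!i mod d = y'!i mod d"
  shows "Bs x y mod d = Bs x' y' mod d"
  unfolding Bs_def by (rule bform_cong) (use assms in auto)

end

context og
begin

definition F2 :: "int list set" where "F2 = {x. length x = m \<and> set x \<subseteq> {0,1}}"

lemma F2_finite: "finite F2"
proof -
  have "finite {xs. set xs \<subseteq> {0::int,1} \<and> length xs = m}"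
    by (rule finite_lists_length_eq) simp
  then show ?thesis unfolding F2_def by (simp add: conj_commute)
qed

lemma F2_card: "card F2 = 2^m"
proof -
  have "card F2 = card {0::int,1} ^ m" unfolding F2_def by (rule card_lists_const)
  moreover have "card {0::int,1} = 2" by simp
  ultimately show ?thesis by (simp only:)
qed

lemma F2_nth: "x \<in> F2 \<Longrightarrow> i < m \<Longrightarrow> x!i = 0 \<or> x!i = 1"
proof -
  assume x: "x \<in> F2" and i: "i < m"
  have "x!i \<in> set x" using x i by (simp add: F2_def)
  moreover have "set x \<subseteq> {0,1}" using x by (simp add: F2_def)
  ultimately show ?thesis by blast
qed

definition add2 :: "int list \<Rightarrow> int list \<Rightarrow> int list" where
  "add2 x u = map2 (\<lambda>a b. (a+b) mod 2) x u"

lemma add2_F2: "x \<in> F2 \<Longrightarrow> length u = m \<Longrightarrow> add2 x u \<in> F2"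
proof -
  have m2: "\<forall>t::int. t mod 2 = 0 \<or> t mod 2 = 1" by presburger
  show "x \<in> F2 \<Longrightarrow> length u = m \<Longrightarrow> add2 x u \<in> F2"
    unfolding F2_def add2_def using m2 by (auto simp: set_zip)
qed

lemma add2_inv: "x \<in> F2 \<Longrightarrow> length u = m \<Longrightarrow> add2 (add2 x u) u = x"
proof -
  assume x: "x \<in> F2" and u: "length u = m"
  have "add2 (add2 x u) u ! i = x ! i" if "i < m" for i
  proof -
    have "add2 (add2 x u) u ! i = ((x!i + u!i) mod 2 + u!i) mod 2"
      using x u that by (simp add: add2_def F2_def)
    also have "\<dots> = (x!i + u!i + u!i) mod 2" by (metis mod_add_left_eq)
    also have "\<dots> = (x!i + 2*u!i) mod 2" by (simp add: algebra_simps)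
    also have "\<dots> = x!i" using F2_nth[OF x that] by auto
    finally show ?thesis .
  qed
  moreover have "length (add2 (add2 x u) u) = m" using x u by (simp add: add2_def F2_def)
  ultimately show ?thesis using x by (auto simp: F2_def intro: nth_equalityI)
qed

lemma add2_mod: "length x = m \<Longrightarrow> length u = m \<Longrightarrow> \<forall>i<m. add2 x u ! i mod 2 = vadd x u ! i mod 2"
  by (simp add: add2_def vadd_nth)

lemma sum_shift:
  assumes "length u = m"
  shows "(\<Sum>x\<in>F2. f (add2 x u)) = (\<Sum>x\<in>F2. (f x :: int))"
  by (rule sum.reindex_bij_witness[of _ "\<lambda>x. add2 x u" "\<lambda>x. add2 x u"])
     (use assms in \<open>auto simp: add2_inv add2_F2\<close>)

definition S :: int where "S = (\<Sum>x\<in>F2. chi (Q x))"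

lemma T_sum:
  assumes "length u = m"
  shows "(\<Sum>x\<in>F2. chi (Q x + Bs u x)) = chi (Q u) * S"
proof -
  have "S = (\<Sum>x\<in>F2. chi (Q (add2 x u)))" unfolding S_def using sum_shift[OF assms, of "\<lambda>x. chi (Q x)"] by simp
  also have "\<dots> = (\<Sum>x\<in>F2. chi (Q u) * chi (Q x + Bs u x))"
  proof (rule sum.cong)
    fix x assume x: "x \<in> F2"
    hence lx: "length x = m" by (simp add: F2_def)
    have "Q (add2 x u) mod 2 = Q (vadd x u) mod 2"
      by (rule Q_cong) (use add2_mod[OF lx assms] in auto)
    hence "chi (Q (add2 x u)) = chi (Q (vadd x u))" by (rule chi_cong)
    also have "\<dots> = chi (Q u) * chi (Q x + Bs u x)"
      using Q_add[OF lx assms] Bs_sym[of x u] by (simp add: chi_add[symmetric] algebra_simps)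
    finally show "chi (Q (add2 x u)) = chi (Q u) * chi (Q x + Bs u x)" .
  qed simp
  finally have "S = chi (Q u) * (\<Sum>x\<in>F2. chi (Q x + Bs u x))" by (simp add: sum_distrib_left)
  hence "chi (Q u) * S = (\<Sum>x\<in>F2. chi (Q x + Bs u x))" by (simp add: mult.assoc[symmetric] chi_sq)
  then show ?thesis by simp
qed

lemma L_sum:
  assumes "length u = m" "x0 \<in> F2" "odd (Bs u x0)"
  shows "(\<Sum>x\<in>F2. chi (Bs u x)) = 0"
proof -
  have lx0: "length x0 = m" using assms by (simp add: F2_def)
  have "(\<Sum>x\<in>F2. chi (Bs u x)) = (\<Sum>x\<in>F2. chi (Bs u (add2 x x0)))"
    using sum_shift[OF lx0, of "\<lambda>x. chi (Bs u x)"] by simp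
  also have "\<dots> = (\<Sum>x\<in>F2. - chi (Bs u x))"
  proof (rule sum.cong)
    fix x assume x: "x \<in> F2"
    hence lx: "length x = m" by (simp add: F2_def)
    have "Bs u (add2 x x0) mod 2 = Bs u (vadd x x0) mod 2"
      by (rule Bs_cong) (use add2_mod[OF lx lx0] in auto)
    hence "chi (Bs u (add2 x x0)) = chi (Bs u (vadd x x0))" by (rule chi_cong)
    also have "\<dots> = chi (Bs u x) * chi (Bs u x0)"
      using Bs_add2[OF lx lx0 assms(1)] by (simp add: chi_add)
    finally show "chi (Bs u (add2 x x0)) = - chi (Bs u x)" using assms(3) by (simp add: chi_def)
  qed simp
  finally show ?thesis by (simp add: sum_negf)
qed

lemma card_F2_int: "int (card {x\<in>F2. p x}) = (\<Sum>x\<in>F2. if p x then 1 else 0)"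
proof -
  have "int (card {x\<in>F2. p x}) = (\<Sum>x\<in>{x\<in>F2. p x}. 1)" by simp
  also have "\<dots> = (\<Sum>x\<in>F2. if p x then 1 else 0)" by (rule sum.inter_filter[OF F2_finite])
  finally show ?thesis .
qed

lemma ind_even: "2 * (if even t then 1 else 0) = 1 + chi t" by (simp add: chi_def)
lemma ind_odd: "2 * (if odd t then 1 else 0) = 1 - chi t" by (simp add: chi_def)

lemma sum_const_F2: "(\<Sum>x\<in>F2. (1::int)) = 2^m" using F2_card by simp

lemma count1:
  assumes "length P = m" "even (Q P)" "x0 \<in> F2" "odd (Bs P x0)"
  shows "4 * int (card {x\<in>F2. even (Q x) \<and> odd (Bs P x)}) = 2^m"
proof -
  have "4 * int (card {x\<in>F2. even (Q x) \<and> odd (Bs P x)})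
     = (\<Sum>x\<in>F2. (2 * (if even (Q x) then 1 else 0)) * (2 * (if odd (Bs P x) then 1 else 0)))"
    unfolding card_F2_int by (auto simp: sum_distrib_left intro!: sum.cong)
  also have "\<dots> = (\<Sum>x\<in>F2. 1 + chi (Q x) - chi (Bs P x) - chi (Q x + Bs P x))"
    unfolding ind_even ind_odd by (simp add: chi_add algebra_simps)
  also have "\<dots> = 2^m + S - 0 - chi (Q P) * S"
    using L_sum[OF assms(1,3,4)] T_sum[OF assms(1)] by (simp add: sum_subtractf sum.distrib S_def sum_const_F2 F2_card)
  also have "\<dots> = 2^m" using assms(2) by (simp add: chi_def)
  finally show ?thesis .
qed

lemma count2:
  assumes "length P = m" "length R = m" "even (Q P)" "even (Q R)"
    "x1 \<in> F2" "odd (Bs P x1)" "x2 \<in> F2" "odd (Bs R x2)" "x0 \<in> F2" "odd (Bs (vadd P R) x0)"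
  shows "8 * int (card {x\<in>F2. even (Q x) \<and> odd (Bs P x) \<and> odd (Bs R x)}) = 2^m - S + chi (Bs P R) * S"
proof -
  have lPR: "length (vadd P R) = m" using assms by simp
  have BPR: "Bs (vadd P R) x = Bs P x + Bs R x" if "x \<in> F2" for x
    using Bs_add2[OF assms(1,2), of x] that Bs_sym by (simp add: F2_def)
  have "8 * int (card {x\<in>F2. even (Q x) \<and> odd (Bs P x) \<and> odd (Bs R x)})
     = (\<Sum>x\<in>F2. (2 * (if even (Q x) then 1 else 0)) * (2 * (if odd (Bs P x) then 1 else 0)) * (2 * (if odd (Bs R x) then 1 else 0)))"
    unfolding card_F2_int by (auto simp: sum_distrib_left intro!: sum.cong)
  also have "\<dots> = (\<Sum>x\<in>F2. 1 - chi (Bs P x) - chi (Bs R x) + chi (Bs (vadd P R) x) + chi (Q x)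
        - chi (Q x + Bs P x) - chi (Q x + Bs R x) + chi (Q x + Bs (vadd P R) x))"
    unfolding ind_even ind_odd
  proof (rule sum.cong)
    fix x assume x: "x \<in> F2"
    show "(1 + chi (Q x)) * (1 - chi (Bs P x)) * (1 - chi (Bs R x)) = 1 - chi (Bs P x) - chi (Bs R x) + chi (Bs (vadd P R) x) + chi (Q x)
        - chi (Q x + Bs P x) - chi (Q x + Bs R x) + chi (Q x + Bs (vadd P R) x)"
    proof -
      have r: "(1 + a) * (1 - b) * (1 - c) = 1 - b - c + b*c + a - a*b - a*c + a*(b*c)" for a b c :: int
        by (simp add: algebra_simps)
      show ?thesis unfolding BPR[OF x] chi_add r ..
    qed
  qed simp
  also have "\<dots> = (\<Sum>x\<in>F2. 1) - (\<Sum>x\<in>F2. chi (Bs P x)) - (\<Sum>x\<in>F2. chi (Bs R x)) + (\<Sum>x\<in>F2. chi (Bs (vadd P R) x)) + (\<Sum>x\<in>F2. chi (Q x))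
        - (\<Sum>x\<in>F2. chi (Q x + Bs P x)) - (\<Sum>x\<in>F2. chi (Q x + Bs R x)) + (\<Sum>x\<in>F2. chi (Q x + Bs (vadd P R) x))"
    by (simp only: sum.distrib sum_subtractf)
  also have "\<dots> = 2^m - 0 - 0 + 0 + S - chi (Q P) * S - chi (Q R) * S + chi (Q (vadd P R)) * S"
    unfolding L_sum[OF assms(1,5,6)] L_sum[OF assms(2,7,8)] L_sum[OF lPR assms(9,10)]
      T_sum[OF assms(1)] T_sum[OF assms(2)] T_sum[OF lPR] sum_const_F2 S_def[symmetric] ..
  also have "chi (Q (vadd P R)) = chi (Bs P R)"
    unfolding Q_add[OF assms(1,2)] chi_add using assms(3,4) by (simp add: chi_def)
  also have "chi (Q P) = 1" using assms(3) by (simp add: chi_def)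
  also have "chi (Q R) = 1" using assms(4) by (simp add: chi_def)
  finally show ?thesis by simp
qed

end

definition Lk :: "nat \<Rightarrow> int list set" where "Lk k = {x. length x = k \<and> set x \<subseteq> {0,1}}"

lemma Lk_finite: "finite (Lk k)"
proof -
  have "finite {xs. set xs \<subseteq> {0::int,1} \<and> length xs = k}"
    by (rule finite_lists_length_eq) simp
  then show ?thesis unfolding Lk_def by (simp add: conj_commute)
qed

lemma Lk_split: "Lk (a+b) = (\<lambda>(u,v). u@v) ` (Lk a \<times> Lk b)"
proof (rule set_eqI, rule iffI)
  fix x assume "x \<in> Lk (a+b)"
  then show "x \<in> (\<lambda>(u,v). u@v) ` (Lk a \<times> Lk b)"
    unfolding Lk_def
    by (auto intro!: image_eqI[of _ _ "(take a x, drop a x)"] dest: in_set_takeD in_set_dropD)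
next
  fix x assume "x \<in> (\<lambda>(u,v). u@v) ` (Lk a \<times> Lk b)"
  then show "x \<in> Lk (a+b)" unfolding Lk_def by auto
qed

lemma Lk_sum_split: "(\<Sum>x\<in>Lk (a+b). f x) = (\<Sum>u\<in>Lk a. \<Sum>v\<in>Lk b. (f (u@v) :: int))"
proof -
  have inj: "inj_on (\<lambda>(u,v). u@v) (Lk a \<times> Lk b)"
    by (auto simp: inj_on_def Lk_def)
  have "(\<Sum>x\<in>Lk (a+b). f x) = sum (f \<circ> (\<lambda>(u,v). u@v)) (Lk a \<times> Lk b)"
    unfolding Lk_split by (rule sum.reindex[OF inj])
  also have "\<dots> = (\<Sum>u\<in>Lk a. \<Sum>v\<in>Lk b. f (u@v))"
    by (simp add: sum.cartesian_product comp_def split_beta)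
  finally show ?thesis .
qed

lemma Lk0: "Lk 0 = {[]}" by (auto simp: Lk_def)
lemma Lk1: "Lk (Suc 0) = {[0],[1]}"
  by (auto simp: Lk_def length_Suc_conv)
lemma Lk2: "Lk 2 = {[0,0],[0,1],[1,0],[1,1]}"
  by (auto simp: Lk_def length_Suc_conv numeral_2_eq_2)

lemma hyp_sum: "(\<Sum>u\<in>Lk k. \<Sum>w\<in>Lk k. chi (\<Sum>i<k. u!i * w!i)) = 2^k"
proof (induction k)
  case 0
  then show ?case by (simp add: Lk0 chi_def)
next
  case (Suc k)
  let ?d = "\<lambda>u w. (\<Sum>i<k. u!i * w!i)"
  have "(\<Sum>u\<in>Lk (Suc k). \<Sum>w\<in>Lk (Suc k). chi (\<Sum>i<Suc k. u!i * w!i))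
     = (\<Sum>a\<in>Lk 1. \<Sum>u\<in>Lk k. \<Sum>b\<in>Lk 1. \<Sum>w\<in>Lk k. chi (\<Sum>i<Suc k. (a@u)!i * (b@w)!i))"
    using Lk_sum_split[where a=1 and b=k] by simp
  also have "\<dots> = (\<Sum>a\<in>Lk 1. \<Sum>u\<in>Lk k. \<Sum>b\<in>Lk 1. \<Sum>w\<in>Lk k. chi (hd a * hd b) * chi (?d u w))"
  proof (intro sum.cong refl)
    fix a u b w assume "a \<in> Lk 1" "b \<in> Lk 1"
    then obtain a0 b0 where "a = [a0]" "b = [b0]" by (auto simp: Lk1)
    then show "chi (\<Sum>i<Suc k. (a@u)!i * (b@w)!i) = chi (hd a * hd b) * chi (?d u w)"
      unfolding sum.lessThan_Suc_shift by (simp add: chi_add)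
  qed
  also have "\<dots> = (\<Sum>a\<in>Lk 1. \<Sum>b\<in>Lk 1. \<Sum>u\<in>Lk k. \<Sum>w\<in>Lk k. chi (hd a * hd b) * chi (?d u w))"
    by (rule sum.cong[OF refl], rule sum.swap)
  also have "\<dots> = (\<Sum>a\<in>Lk 1. \<Sum>b\<in>Lk 1. chi (hd a * hd b) * (\<Sum>u\<in>Lk k. \<Sum>w\<in>Lk k. chi (?d u w)))"
    by (simp add: sum_distrib_left)
  also have "\<dots> = (\<Sum>a\<in>Lk 1. \<Sum>b\<in>Lk 1. chi (hd a * hd b)) * (\<Sum>u\<in>Lk k. \<Sum>w\<in>Lk k. chi (?d u w))"
    by (simp add: sum_distrib_right)
  also have "\<dots> = 2 * 2^k" unfolding Suc.IH by (simp add: Lk1 chi_def)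
  finally show ?case by simp
qed

context og
begin

definition Dy :: "int list \<Rightarrow> int" where
  "Dy y = (if \<delta> = 1 then y!0*y!0 else if \<delta> = 2 then z*y!0*y!0 + y!0*y!1 + z*y!1*y!1 else 0)"

lemma Q_app:
  assumes "length u = \<nu>" "length w = \<nu>"
  shows "Q (u@w@y) = (\<Sum>i<\<nu>. u!i * w!i) + Dy y"
proof -
  have "(\<Sum>i<\<nu>. (u@w@y)!i * (u@w@y)!(i+\<nu>)) = (\<Sum>i<\<nu>. u!i * w!i)"
    using assms by (intro sum.cong) (auto simp: nth_append)
  moreover have "Dg (u@w@y) (u@w@y) = Dy y"
    using assms by (simp add: Dg_def Dy_def nth_append)
  ultimately show ?thesis unfolding Q_expl by simp
qed

lemma F2_Lk: "F2 = Lk (\<nu> + (\<nu> + \<delta>))" unfolding F2_def Lk_def by (simp add: mult_2 add.assoc)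

definition sd :: int where "sd = (if \<delta> = 0 then 1 else if \<delta> = 1 then 0 else -2)"

lemma S_val: "S = 2^\<nu> * sd"
proof -
  have "S = (\<Sum>u\<in>Lk \<nu>. \<Sum>w\<in>Lk \<nu>. \<Sum>y\<in>Lk \<delta>. chi (Q (u@w@y)))"
    unfolding S_def F2_Lk Lk_sum_split by simp
  also have "\<dots> = (\<Sum>u\<in>Lk \<nu>. \<Sum>w\<in>Lk \<nu>. \<Sum>y\<in>Lk \<delta>. chi (\<Sum>i<\<nu>. u!i * w!i) * chi (Dy y))"
    by (intro sum.cong refl) (simp add: Q_app Lk_def chi_add)
  also have "\<dots> = (\<Sum>u\<in>Lk \<nu>. \<Sum>w\<in>Lk \<nu>. chi (\<Sum>i<\<nu>. u!i * w!i) * (\<Sum>y\<in>Lk \<delta>. chi (Dy y)))"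
    by (simp add: sum_distrib_left)
  also have "\<dots> = (\<Sum>u\<in>Lk \<nu>. \<Sum>w\<in>Lk \<nu>. chi (\<Sum>i<\<nu>. u!i * w!i)) * (\<Sum>y\<in>Lk \<delta>. chi (Dy y))"
    by (simp add: sum_distrib_right)
  also have "(\<Sum>y\<in>Lk \<delta>. chi (Dy y)) = sd"
  proof -
    have "\<delta> = 0 \<or> \<delta> = 1 \<or> \<delta> = 2" using d2 by auto
    moreover have "chi z = -1" "chi (2*z+1) = -1" using zodd by (auto simp: chi_def)
    ultimately show ?thesis
      by (auto simp: Lk0 Lk1 Lk2 Dy_def sd_def chi_def)
  qed
  finally show ?thesis unfolding hyp_sum by simp
qed

end

context og
begin

definition zv :: "int list" where "zv = replicate m 0"
definition ev :: "nat \<Rightarrow> int list" where "ev j = (replicate m 0)[j := 1]"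

lemma Dg0: "\<delta> = 0 \<Longrightarrow> Dg x y = 0" unfolding Dg_def by simp
lemma Dg1: "\<delta> = 1 \<Longrightarrow> Dg x y = x!(2*\<nu>)*y!(2*\<nu>)" unfolding Dg_def by simp
lemma Dg2: "\<delta> = 2 \<Longrightarrow> Dg x y = z*x!(2*\<nu>)*y!(2*\<nu>) + x!(2*\<nu>)*y!(2*\<nu>+1) + z*x!(2*\<nu>+1)*y!(2*\<nu>+1)"
  unfolding Dg_def by simp
lemma d012: "\<delta> = 0 \<or> \<delta> = 1 \<or> \<delta> = 2" using d2 by auto

lemma zv_nth: "k < m \<Longrightarrow> zv ! k = 0" by (simp add: zv_def)
lemma Dg_zv: "Dg zv zv = 0"
proof -
  consider "\<delta> = 0" | "\<delta> = 1" | "\<delta> = 2" using d012 by blast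
  then show ?thesis
  proof cases
    case 1 then show ?thesis unfolding Dg0[OF 1] by simp
  next
    case 2
    have "2*\<nu> < m" using 2 by simp
    then show ?thesis unfolding Dg1[OF 2] by (simp add: zv_nth)
  next
    case 3
    have "2*\<nu> < m" "2*\<nu>+1 < m" using 3 by simp_all
    then show ?thesis unfolding Dg2[OF 3] by (simp add: zv_nth)
  qed
qed

lemma rep0: "set (replicate k (0::int)) \<subseteq> {0}" by (induct k) auto
lemma zv_F2: "zv \<in> F2" using rep0[of m] by (auto simp: zv_def F2_def)
lemma zv_len: "length zv = m" by (simp add: zv_def)
lemma eq_zv: "length P = m \<Longrightarrow> \<forall>i<m. P!i = 0 \<Longrightarrow> P = zv"
  by (intro nth_equalityI) (auto simp: zv_len zv_nth)
lemma ev_F2: "ev j \<in> F2"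
  using set_update_subset_insert[of "replicate m 0" j 1] rep0[of m] by (auto simp: ev_def F2_def)
lemma ev_len[simp]: "length (ev j) = m" by (simp add: ev_def)
lemma ev_nth: "k < m \<Longrightarrow> ev j ! k = (if k = j then 1 else 0)"
  by (simp add: ev_def nth_list_update)

lemma Q_zv: "Q zv = 0" by (auto simp: Q_def bform_def zv_def intro!: sum.neutral)
lemma Bs_zv: "Bs u zv = 0" by (auto simp: Bs_def bform_def zv_def intro!: sum.neutral)

definition partner :: "nat \<Rightarrow> nat" where "partner j = (if j < \<nu> then j+\<nu> else j-\<nu>)"

lemma Dg_ev: "j < 2*\<nu> \<Longrightarrow> Dg u (ev j) = 0 \<and> Dg (ev j) u = 0"
proof -
  assume j: "j < 2*\<nu>"
  have a: "2*\<nu> < m \<Longrightarrow> ev j ! (2*\<nu>) = 0" using j by (simp add: ev_nth)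
  have b: "2*\<nu>+1 < m \<Longrightarrow> ev j ! (2*\<nu>+1) = 0" using j by (simp add: ev_nth)
  consider "\<delta> = 0" | "\<delta> = 1" | "\<delta> = 2" using d012 by blast
  then show ?thesis
  proof cases
    case 1 then show ?thesis unfolding Dg0[OF 1] by simp
  next
    case 2
    have "2*\<nu> < m" using 2 by simp
    then show ?thesis unfolding Dg1[OF 2] using a by simp
  next
    case 3
    have "2*\<nu> < m" "2*\<nu>+1 < m" using 3 by simp_all
    then show ?thesis unfolding Dg2[OF 3] using a b by simp
  qed
qed

lemma Bs_ev:
  assumes "j < 2*\<nu>"
  shows "Bs u (ev j) = u ! partner j"
proof -
  have "(\<Sum>i<\<nu>. u!i * ev j!(i+\<nu>) + ev j!i * u!(i+\<nu>))
      = (\<Sum>i<\<nu>. (if i = j - \<nu> \<and> \<nu> \<le> j then u!i else 0) + (if i = j then u!(i+\<nu>) else 0))"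
    using assms by (intro sum.cong refl) (auto simp: ev_nth)
  also have "\<dots> = u ! partner j"
    using assms by (auto simp: sum.distrib partner_def)
  finally show ?thesis unfolding Bs_expl using Dg_ev[OF assms] by simp
qed

lemma Q_ev: "j < 2*\<nu> \<Longrightarrow> Q (ev j) = 0"
proof -
  assume j: "j < 2*\<nu>"
  have "(\<Sum>i<\<nu>. ev j!i * ev j!(i+\<nu>)) = 0"
    using j by (intro sum.neutral) (auto simp: ev_nth)
  then show ?thesis unfolding Q_expl using Dg_ev[OF j] by simp
qed

lemma partner_lt: "j < 2*\<nu> \<Longrightarrow> partner j < 2*\<nu>" by (auto simp: partner_def)

lemma F2_len: "x \<in> F2 \<Longrightarrow> length x = m" by (simp add: F2_def)

lemma hyp_eq:
  assumes "length P = m" "length R = m" "\<forall>i<2*\<nu>. P!i = R!i"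
  shows "Q P - Dg P P = Q R - Dg R R"
proof -
  have "(\<Sum>i<\<nu>. P!i * P!(i+\<nu>)) = (\<Sum>i<\<nu>. R!i * R!(i+\<nu>))"
    using assms by (intro sum.cong) auto
  then show ?thesis unfolding Q_expl by simp
qed

lemma Iso_idx:
  assumes "P \<in> F2" "P \<noteq> zv" "even (Q P)"
  shows "\<exists>i<2*\<nu>. P!i = 1"
proof (rule ccontr)
  assume nt: "\<not> ?thesis"
  have h: "\<forall>i<2*\<nu>. P!i = zv!i"
  proof (intro allI impI)
    fix i assume i: "i < 2*\<nu>"
    hence "i < m" by simp
    then show "P!i = zv!i" using F2_nth[OF assms(1) \<open>i < m\<close>] nt i by (auto simp: zv_def)
  qed
  have lP: "length P = m" using assms F2_len by auto
  have QP: "Q P = Dg P P" using hyp_eq[OF lP _ h] Q_zv Dg_zv by (simp add: zv_def)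
  have "\<delta> = 0 \<or> \<delta> = 1 \<or> \<delta> = 2" using d2 by auto
  then show False
  proof (elim disjE)
    assume d0: "\<delta> = 0"
    have mm: "2*\<nu> + \<delta> = 2*\<nu>" using d0 by simp
    have "\<forall>i<m. P!i = zv!i" using h unfolding mm .
    then have "P = zv" using lP zv_len by (intro nth_equalityI) auto
    then show False using assms by simp
  next
    assume d: "\<delta> = 1"
    have "P ! (2*\<nu>) = 0"
    proof (rule ccontr)
      assume "P!(2*\<nu>) \<noteq> 0" hence "P!(2*\<nu>) = 1" using F2_nth[OF assms(1)] d by fastforce
      moreover have "Q P = P!(2*\<nu>)*P!(2*\<nu>)" using QP unfolding Dg1[OF d] .
      ultimately show False using assms(3) by simp
    qed
    have "\<forall>i<m. P!i = 0"
    proof (intro allI impI)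
      fix i assume i: "i < m"
      then consider "i < 2*\<nu>" | "i = 2*\<nu>" using d by linarith
      then show "P!i = 0" using h zv_nth i \<open>P ! (2*\<nu>) = 0\<close> by cases auto
    qed
    then have "P = zv" using lP eq_zv by blast
    then show False using assms by simp
  next
    assume d: "\<delta> = 2"
    have a: "P!(2*\<nu>) = 0 \<or> P!(2*\<nu>) = 1" "P!(2*\<nu>+1) = 0 \<or> P!(2*\<nu>+1) = 1"
      using F2_nth[OF assms(1)] d by auto
    have "Q P = z*P!(2*\<nu>)*P!(2*\<nu>) + P!(2*\<nu>)*P!(2*\<nu>+1) + z*P!(2*\<nu>+1)*P!(2*\<nu>+1)"
      using QP unfolding Dg2[OF d] .
    then have "P!(2*\<nu>) = 0 \<and> P!(2*\<nu>+1) = 0"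
      using a assms(3) zodd by auto
    have "\<forall>i<m. P!i = 0"
    proof (intro allI impI)
      fix i assume i: "i < m"
      then consider "i < 2*\<nu>" | "i = 2*\<nu>" | "i = 2*\<nu>+1" using d by linarith
      then show "P!i = 0" using h zv_nth i \<open>P!(2*\<nu>) = 0 \<and> P!(2*\<nu>+1) = 0\<close> by cases auto
    qed
    then have "P = zv" using lP eq_zv by blast
    then show False using assms by simp
  qed
qed

lemma nonrad:
  assumes "length u = m" "(\<exists>i<2*\<nu>. odd (u!i)) \<or> (\<delta> = 2 \<and> (odd (u!(2*\<nu>)) \<or> odd (u!(2*\<nu>+1))))"
  shows "\<exists>x0\<in>F2. odd (Bs u x0)"
  using assms(2)
proof (elim disjE conjE exE)
  fix i assume i: "i < 2*\<nu>" "odd (u!i)"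
  have "partner i < 2*\<nu>" using i(1) by (rule partner_lt)
  moreover have "partner (partner i) = i" using i by (auto simp: partner_def)
  ultimately have "Bs u (ev (partner i)) = u!i" using Bs_ev by metis
  then show ?thesis using i ev_F2 by metis
next
  assume d: "\<delta> = 2" and o: "odd (u!(2*\<nu>))"
  have lt: "2*\<nu>+1 < m" using d by simp
  have s0: "(\<Sum>i<\<nu>. u!i * ev (2*\<nu>+1)!(i+\<nu>) + ev (2*\<nu>+1)!i * u!(i+\<nu>)) = 0"
    using lt by (intro sum.neutral) (auto simp: ev_nth)
  have "ev (2*\<nu>+1) ! (2*\<nu>) = 0" "ev (2*\<nu>+1) ! (2*\<nu>+1) = 1" using lt by (simp_all add: ev_nth)
  then have "Bs u (ev (2*\<nu>+1)) = 2*z*u!(2*\<nu>+1) + u!(2*\<nu>)"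
    unfolding Bs_expl s0 Dg2[OF d] by (simp add: algebra_simps)
  then have "odd (Bs u (ev (2*\<nu>+1)))" using o by simp
  then show ?thesis using ev_F2 by blast
next
  assume d: "\<delta> = 2" and o: "odd (u!(2*\<nu>+1))"
  have lt: "2*\<nu>+1 < m" using d by simp
  have s0: "(\<Sum>i<\<nu>. u!i * ev (2*\<nu>)!(i+\<nu>) + ev (2*\<nu>)!i * u!(i+\<nu>)) = 0"
    using lt by (intro sum.neutral) (auto simp: ev_nth)
  have "ev (2*\<nu>) ! (2*\<nu>) = 1" "ev (2*\<nu>) ! (2*\<nu>+1) = 0" using lt by (simp_all add: ev_nth)
  then have "Bs u (ev (2*\<nu>)) = 2*z*u!(2*\<nu>) + u!(2*\<nu>+1)"
    unfolding Bs_expl s0 Dg2[OF d] by (simp add: algebra_simps)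
  then have "odd (Bs u (ev (2*\<nu>)))" using o by simp
  then show ?thesis using ev_F2 by blast
qed

end

context og
begin

definition Iso2 :: "int list set" where "Iso2 = {P\<in>F2. P \<noteq> zv \<and> even (Q P)}"

lemma Iso2_finite: "finite Iso2" unfolding Iso2_def using F2_finite by simp

lemma diff_idx:
  assumes P: "P \<in> F2" and R: "R \<in> F2" and "even (Q P)" "even (Q R)" "P \<noteq> R"
  shows "(\<exists>i<2*\<nu>. P!i \<noteq> R!i) \<or> (\<delta> = 2 \<and> (P!(2*\<nu>) \<noteq> R!(2*\<nu>) \<or> P!(2*\<nu>+1) \<noteq> R!(2*\<nu>+1)))"
proof (rule ccontr)
  assume nt: "\<not> ?thesis"
  hence h: "\<forall>i<2*\<nu>. P!i = R!i" by blast
  have lP: "length P = m" and lR: "length R = m" using P R by (simp_all add: F2_def)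
  have eqR: "P = R" if "\<forall>i<m. P!i = R!i" using that lP lR by (intro nth_equalityI) auto
  consider "\<delta> = 0" | "\<delta> = 1" | "\<delta> = 2" using d012 by blast
  then show False
  proof cases
    case 1
    have "\<forall>i<m. P!i = R!i" using h 1 by simp
    then show False using eqR assms(5) by blast
  next
    case 2
    have ne: "P!(2*\<nu>) \<noteq> R!(2*\<nu>)"
    proof
      assume e: "P!(2*\<nu>) = R!(2*\<nu>)"
      have "\<forall>i<m. P!i = R!i"
      proof (intro allI impI)
        fix i assume "i < m"
        then consider "i < 2*\<nu>" | "i = 2*\<nu>" using 2 by linarith
        then show "P!i = R!i" using h e by cases auto
      qed
      then show False using eqR assms(5) by blast
    qed
    have lt: "2*\<nu> < m" using 2 by simp
    have v: "(P!(2*\<nu>) = 0 \<and> R!(2*\<nu>) = 1) \<or> (P!(2*\<nu>) = 1 \<and> R!(2*\<nu>) = 0)"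
      using F2_nth[OF P lt] F2_nth[OF R lt] ne by auto
    have "Q P - P!(2*\<nu>)*P!(2*\<nu>) = Q R - R!(2*\<nu>)*R!(2*\<nu>)"
      using hyp_eq[OF lP lR h] unfolding Dg1[OF 2] .
    then have "Q P - Q R = P!(2*\<nu>)*P!(2*\<nu>) - R!(2*\<nu>)*R!(2*\<nu>)" by simp
    then have "odd (Q P - Q R)" using v by auto
    then show False using assms(3,4) by simp
  next
    case 3
    have "\<forall>i<m. P!i = R!i"
    proof (intro allI impI)
      fix i assume "i < m"
      then consider "i < 2*\<nu>" | "i = 2*\<nu>" | "i = 2*\<nu>+1" using 3 by linarith
      then show "P!i = R!i" using h nt 3 by cases auto
    qed
    then show False using eqR assms(5) by blast
  qed
qed

lemma vadd_odd:
  assumes "P \<in> F2" "R \<in> F2" "i < m" "P!i \<noteq> R!i"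
  shows "odd (vadd P R ! i)"
proof -
  have "vadd P R ! i = P!i + R!i" using assms by (simp add: vadd_nth F2_def)
  moreover have "(P!i = 0 \<and> R!i = 1) \<or> (P!i = 1 \<and> R!i = 0)"
    using F2_nth[OF assms(1,3)] F2_nth[OF assms(2,3)] assms(4) by auto
  ultimately show ?thesis by auto
qed

lemma nonrad_pair:
  assumes P: "P \<in> F2" and R: "R \<in> F2" and "even (Q P)" "even (Q R)" "P \<noteq> R"
  shows "\<exists>x0\<in>F2. odd (Bs (vadd P R) x0)"
proof -
  have l: "length (vadd P R) = m" using P R by (simp add: F2_def)
  from diff_idx[OF assms]
  show ?thesis
  proof (elim disjE conjE exE)
    fix i assume "i < 2*\<nu>" "P!i \<noteq> R!i"
    then have "odd (vadd P R ! i)" using vadd_odd[OF P R] by simp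
    then show ?thesis using nonrad[OF l] \<open>i < 2*\<nu>\<close> by blast
  next
    assume d: "\<delta> = 2" and "P!(2*\<nu>) \<noteq> R!(2*\<nu>)"
    then have "odd (vadd P R ! (2*\<nu>))" using vadd_odd[OF P R] by simp
    then show ?thesis using nonrad[OF l] d by blast
  next
    assume d: "\<delta> = 2" and "P!(2*\<nu>+1) \<noteq> R!(2*\<nu>+1)"
    then have "odd (vadd P R ! (2*\<nu>+1))" using vadd_odd[OF P R] by simp
    then show ?thesis using nonrad[OF l] d by blast
  qed
qed

lemma nonrad_single:
  assumes "P \<in> Iso2"
  shows "\<exists>x0\<in>F2. odd (Bs P x0)"
proof -
  have P: "P \<in> F2" "P \<noteq> zv" "even (Q P)" using assms by (auto simp: Iso2_def)
  obtain i where "i < 2*\<nu>" "P!i = 1" using Iso_idx[OF P] by blast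
  then have "\<exists>i<2*\<nu>. odd (P!i)" by auto
  then show ?thesis using nonrad[of P] P(1) by (simp add: F2_def)
qed

lemma G1: "2 * int (card Iso2) + 2 = 2^m + S"
proof -
  have e: "{x\<in>F2. even (Q x)} = insert zv Iso2" using zv_F2 Q_zv by (auto simp: Iso2_def)
  have "2 * int (card {x\<in>F2. even (Q x)}) = (\<Sum>x\<in>F2. 2 * (if even (Q x) then 1 else 0))"
    unfolding card_F2_int by (simp add: sum_distrib_left)
  also have "\<dots> = (\<Sum>x\<in>F2. 1 + chi (Q x))" unfolding ind_even ..
  also have "\<dots> = 2^m + S" by (simp add: sum.distrib S_def F2_card)
  finally show ?thesis unfolding e using Iso2_finite by (simp add: Iso2_def)
qed

lemma G2:
  assumes "P \<in> Iso2"
  shows "4 * int (card {R\<in>Iso2. odd (Bs P R)}) = 2^m"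
proof -
  have P: "P \<in> F2" "even (Q P)" using assms by (auto simp: Iso2_def)
  have e: "{R\<in>Iso2. odd (Bs P R)} = {x\<in>F2. even (Q x) \<and> odd (Bs P x)}"
    using Bs_zv by (auto simp: Iso2_def)
  obtain x0 where "x0 \<in> F2" "odd (Bs P x0)" using nonrad_single[OF assms] by blast
  then show ?thesis unfolding e using count1[OF _ P(2)] P(1) by (simp add: F2_def)
qed

lemma G3:
  assumes "P \<in> Iso2" "R \<in> Iso2" "P \<noteq> R"
  shows "8 * int (card {x\<in>Iso2. odd (Bs P x) \<and> odd (Bs R x)}) = 2^m - S + chi (Bs P R) * S"
proof -
  have P: "P \<in> F2" "even (Q P)" using assms by (auto simp: Iso2_def)
  have R: "R \<in> F2" "even (Q R)" using assms by (auto simp: Iso2_def)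
  have e: "{x\<in>Iso2. odd (Bs P x) \<and> odd (Bs R x)} = {x\<in>F2. even (Q x) \<and> odd (Bs P x) \<and> odd (Bs R x)}"
    using Bs_zv by (auto simp: Iso2_def)
  obtain x1 where "x1 \<in> F2" "odd (Bs P x1)" using nonrad_single[OF assms(1)] by blast
  moreover obtain x2 where "x2 \<in> F2" "odd (Bs R x2)" using nonrad_single[OF assms(2)] by blast
  moreover obtain x0 where "x0 \<in> F2" "odd (Bs (vadd P R) x0)"
    using nonrad_pair[OF P(1) R(1) P(2) R(2) assms(3)] by blast
  ultimately show ?thesis unfolding e using count2[OF _ _ P(2) R(2)] P(1) R(1) by (simp add: F2_def)
qed

end

lemma odd_inv:
  fixes a :: int
  assumes "odd a" "n \<ge> 1"
  shows "\<exists>u. (a*u) mod 2^n = 1"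
proof -
  have "coprime a 2" using assms(1) by (simp add: coprime_commute)
  hence "coprime a ((2::int)^n)" by simp
  hence g: "gcd a ((2::int)^n) = 1" by (simp add: coprime_iff_gcd_eq_1)
  obtain u v where uv: "u * a + v * 2^n = (1::int)" using bezout_int[of a "2^n"] g by auto
  have "a*u - 1 = (-v) * 2^n" using uv by (simp add: algebra_simps)
  hence "(2::int)^n dvd a*u - 1" by simp
  hence "(a*u) mod 2^n = 1 mod 2^n" by (metis mod_eq_dvd_iff)
  moreover have "(1::int) mod 2^n = 1"
  proof -
    show ?thesis using assms(2) by simp
  qed
  ultimately show ?thesis by auto
qed

lemma zunit_odd:
  assumes "n \<ge> 1"
  shows "zunit (2^n) a \<longleftrightarrow> odd a"
proof
  assume "zunit (2^n) a"
  then obtain b where b: "(a*b) mod 2^n = 1 mod 2^n" unfolding zunit_def by blast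
  have "(1::int) mod 2^n = 1" using assms by simp
  with b have e: "(a*b) mod 2^n = 1" by simp
  have "(2::int) dvd 2^n" using assms by (simp add: dvd_power)
  hence "(a*b) mod 2^n mod 2 = (a*b) mod 2" by (simp add: mod_mod_cancel)
  with e have "(a*b) mod 2 = 1" by simp
  hence "odd (a*b)" by (simp only: odd_iff_mod_2_eq_one)
  then show "odd a" by simp
next
  assume "odd a"
  then obtain u where "(a*u) mod 2^n = 1" using odd_inv assms by blast
  moreover have "(1::int) mod 2^n = 1"
  proof -
    show ?thesis using assms by simp
  qed
  ultimately show "zunit (2^n) a" unfolding zunit_def by metis
qed

lemma pow_pred: "n \<ge> 1 \<Longrightarrow> (2::int)^n = 2 * 2^(n-1)" by (cases n) auto

lemma card_res:
  assumes "n \<ge> 1" "b = 0 \<or> b = 1"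
  shows "card {t::int\<in>{0..<2^n}. t mod 2 = b} = 2^(n-1)"
proof -
  have "{t::int\<in>{0..<2^n}. t mod 2 = b} = (\<lambda>k. 2*k+b) ` {0..<2^(n-1)}"
  proof (rule set_eqI, rule iffI)
    fix t assume t: "t \<in> {t::int\<in>{0..<2^n}. t mod 2 = b}"
    have "(2::int)^n = 2 * 2^(n-1)" using assms(1) by (rule pow_pred)
    then have "t div 2 \<in> {0..<2^(n-1)}" using t by auto
    moreover have "t = 2*(t div 2) + b" using t by auto
    ultimately show "t \<in> (\<lambda>k. 2*k+b) ` {0..<2^(n-1)}" by blast
  next
    fix t assume "t \<in> (\<lambda>k. 2*k+b) ` {0..<(2::int)^(n-1)}"
    then obtain k where k: "k \<in> {0..<(2::int)^(n-1)}" "t = 2*k+b" by blast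
    have "(2::int)^n = 2 * 2^(n-1)" using assms(1) by (rule pow_pred)
    then show "t \<in> {t::int\<in>{0..<2^n}. t mod 2 = b}" using k assms(2) by auto
  qed
  moreover have "inj_on (\<lambda>k::int. 2*k+b) A" for A by (auto simp: inj_on_def)
  ultimately show ?thesis by (simp add: card_image)
qed

context og
begin

abbreviation qq :: int where "qq \<equiv> 2^n"

lemma qq_ge2: "qq \<ge> 2"
proof -
  have "(2::int)^n \<ge> 2^1" using n1 by (intro power_increasing) auto
  then show ?thesis by simp
qed

lemma dvd2: "(2::int) dvd qq" using n1 by (simp add: dvd_power)

lemma zunit_iff: "zunit qq a \<longleftrightarrow> odd a" using zunit_odd[OF n1] .

definition Zl :: "int list set" where "Zl = {a. length a = m \<and> set a \<subseteq> {0..<qq}}"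

lemma Zl_nth: "a \<in> Zl \<Longrightarrow> i < m \<Longrightarrow> 0 \<le> a!i \<and> a!i < qq"
proof -
  assume a: "a \<in> Zl" and i: "i < m"
  have "a!i \<in> set a" using a i by (simp add: Zl_def)
  then show ?thesis using a by (auto simp: Zl_def)
qed

lemma Zl_finite: "finite Zl"
proof -
  have "finite {xs. set xs \<subseteq> {0..<qq} \<and> length xs = m}"
    by (rule finite_lists_length_eq) simp
  then show ?thesis unfolding Zl_def by (simp add: conj_commute)
qed

definition Uq :: "int set" where "Uq = {l\<in>{0..<qq}. odd l}"

lemma Uq_card: "card Uq = 2^(n-1)"
proof -
  have "Uq = {t\<in>{0..<qq}. t mod 2 = 1}" unfolding Uq_def by (auto simp: odd_iff_mod_2_eq_one)
  then show ?thesis using card_res[OF n1, of 1] by simp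
qed

lemma cls_Uq: "cls qq a = {scale qq l a | l. l \<in> Uq}"
  unfolding cls_def Uq_def using zunit_iff by auto

definition red :: "int list \<Rightarrow> int list" where "red a = map (\<lambda>t. t mod 2) a"

lemma red_len[simp]: "length (red a) = length a" by (simp add: red_def)
lemma red_nth: "i < length a \<Longrightarrow> red a ! i = a!i mod 2" by (simp add: red_def)

lemma scale_len[simp]: "length (scale qq l a) = length a" by (simp add: scale_def)
lemma scale_nth: "i < length a \<Longrightarrow> scale qq l a ! i = (l * a!i) mod qq" by (simp add: scale_def)

lemma scale_Zl: "a \<in> Zl \<Longrightarrow> scale qq l a \<in> Zl"
  unfolding Zl_def scale_def using qq_ge2 by auto

lemma red_scale: "odd l \<Longrightarrow> red (scale qq l a) = red a"
proof -
  assume l: "odd l"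
  have "(l * t) mod qq mod 2 = t mod 2" for t
  proof -
    have "(l * t) mod qq mod 2 = (l*t) mod 2" using dvd2 by (simp add: mod_mod_cancel)
    also have "\<dots> = t mod 2" using l by (metis mod_mult_left_eq odd_iff_mod_2_eq_one mult_1)
    finally show ?thesis .
  qed
  then show ?thesis by (simp add: red_def scale_def)
qed

lemma scale_scale: "scale qq l' (scale qq l a) = scale qq ((l'*l) mod qq) a"
  by (simp add: scale_def mod_mult_right_eq mod_mult_left_eq mult.assoc)

lemma scale_one: "a \<in> Zl \<Longrightarrow> scale qq 1 a = a"
proof -
  assume a: "a \<in> Zl"
  show ?thesis by (rule nth_equalityI) (use a Zl_nth in \<open>auto simp: scale_nth Zl_def\<close>)
qed

lemma one_Uq: "1 \<in> Uq" using qq_ge2 by (simp add: Uq_def)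

lemma Uq_inv: "l \<in> Uq \<Longrightarrow> \<exists>l'\<in>Uq. (l'*l) mod qq = 1"
proof -
  assume l: "l \<in> Uq"
  then obtain u where u: "(l*u) mod qq = 1" using odd_inv[of l n] n1 by (auto simp: Uq_def)
  have "odd (u mod qq)"
  proof
    assume "even (u mod qq)"
    then have "even u" using dvd2 by (metis dvd_mod_iff)
    then have "even ((l*u) mod qq)" using dvd2 by (simp add: dvd_mod_iff)
    then show False using u by simp
  qed
  moreover have "u mod qq \<in> {0..<qq}" using qq_ge2 by simp
  moreover have "((u mod qq)*l) mod qq = 1" using u by (metis mod_mult_left_eq mult.commute)
  ultimately show ?thesis unfolding Uq_def by blast
qed

lemma Uq_mult: "l \<in> Uq \<Longrightarrow> l' \<in> Uq \<Longrightarrow> (l'*l) mod qq \<in> Uq"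
proof -
  assume "l \<in> Uq" "l' \<in> Uq"
  then have "odd (l'*l)" by (simp add: Uq_def)
  then have "odd ((l'*l) mod qq)" using dvd2 by (metis dvd_mod_iff)
  then show ?thesis using qq_ge2 by (simp add: Uq_def)
qed

lemma self_cls: "a \<in> Zl \<Longrightarrow> a \<in> cls qq a"
  unfolding cls_Uq using one_Uq scale_one by force

lemma cls_sub: "a \<in> Zl \<Longrightarrow> b \<in> cls qq a \<Longrightarrow> cls qq b \<subseteq> cls qq a"
proof
  fix c assume a: "a \<in> Zl" and b: "b \<in> cls qq a" and c: "c \<in> cls qq b"
  obtain l where l: "l \<in> Uq" "b = scale qq l a" using b unfolding cls_Uq by blast
  obtain l' where l': "l' \<in> Uq" "c = scale qq l' b" using c unfolding cls_Uq by blast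
  have "c = scale qq ((l'*l) mod qq) a" using l l' by (simp add: scale_scale)
  then show "c \<in> cls qq a" unfolding cls_Uq using Uq_mult[OF l(1) l'(1)] by blast
qed

lemma cls_eq: "a \<in> Zl \<Longrightarrow> b \<in> cls qq a \<Longrightarrow> cls qq b = cls qq a"
proof
  assume a: "a \<in> Zl" and b: "b \<in> cls qq a"
  then show "cls qq b \<subseteq> cls qq a" by (rule cls_sub)
  obtain l where l: "l \<in> Uq" "b = scale qq l a" using b unfolding cls_Uq by blast
  obtain l' where l': "l' \<in> Uq" "(l'*l) mod qq = 1" using Uq_inv[OF l(1)] by blast
  have "scale qq l' b = a" using l l' scale_one[OF a] by (simp add: scale_scale)
  then have ab: "a \<in> cls qq b" unfolding cls_Uq using l'(1) by blast
  have bZ: "b \<in> Zl" using l scale_Zl a by simp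
  show "cls qq a \<subseteq> cls qq b" using bZ ab by (rule cls_sub)
qed

lemma cls_card:
  assumes a: "a \<in> Zl" and i: "i < m" "odd (a!i)"
  shows "card (cls qq a) = 2^(n-1)"
proof -
  have "inj_on (\<lambda>l. scale qq l a) Uq"
  proof (rule inj_onI)
    fix l l' assume l: "l \<in> Uq" "l' \<in> Uq" and e: "scale qq l a = scale qq l' a"
    have "(l * a!i) mod qq = (l' * a!i) mod qq"
      using arg_cong[OF e, of "\<lambda>x. x!i"] a i by (simp add: scale_nth Zl_def)
    then have "qq dvd (l - l') * a!i" by (simp add: mod_eq_dvd_iff algebra_simps)
    moreover have "coprime qq (a!i)" using i(2) by simp
    ultimately have "qq dvd (l - l')" using coprime_dvd_mult_left_iff by blast
    moreover have "\<bar>l - l'\<bar> < qq" using l by (auto simp: Uq_def)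
    ultimately have "l - l' = 0" using dvd_imp_le_int[of "l-l'" qq] qq_ge2 by (cases "l - l' = 0") auto
    then show "l = l'" by simp
  qed
  moreover have "cls qq a = (\<lambda>l. scale qq l a) ` Uq" unfolding cls_Uq by blast
  ultimately show ?thesis using Uq_card by (simp add: card_image)
qed

end

context og
begin

lemma partner_props:
  assumes "i < 2*\<nu>"
  shows "partner i < 2*\<nu>" "partner (partner i) = i" "partner i \<noteq> i"
  using assms nu1 by (auto simp: partner_def)

lemma Q_upd:
  assumes la: "length a = m" and i: "i < 2*\<nu>" and p: "p = partner i"
  shows "Q (a[p:=t]) = Q (a[p:=0]) + t * a!i"
proof -
  have pi: "p < 2*\<nu>" "partner p = i" "p \<noteq> i" using partner_props[OF i] p by auto
  let ?x = "a[p:=0]"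
  have lx: "length ?x = m" using la by simp
  have e: "a[p:=t] = vadd ?x (smul t (ev p))"
  proof (rule nth_equalityI)
    show "length (a[p:=t]) = length (vadd ?x (smul t (ev p)))" using la by simp
  next
    fix k assume "k < length (a[p:=t])"
    then have k: "k < m" using la by simp
    then show "a[p:=t] ! k = vadd ?x (smul t (ev p)) ! k"
      using la by (simp add: vadd_nth smul_nth ev_nth nth_list_update)
  qed
  have "Q (a[p:=t]) = Q ?x + Q (smul t (ev p)) + Bs ?x (smul t (ev p))"
    unfolding e using lx by (simp add: Q_add)
  also have "Q (smul t (ev p)) = 0" using Q_smul[of "ev p" t] Q_ev[OF pi(1)] by simp
  also have "Bs ?x (smul t (ev p)) = t * a!i"
    using Bs_smul2[of "ev p" ?x t] lx Bs_ev[OF pi(1), of ?x] pi by simp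
  finally show ?thesis by simp
qed

definition Lift :: "int list \<Rightarrow> int list set" where
  "Lift P = {a\<in>Zl. red a = P \<and> Q a mod qq = 0}"

lemma Lift_card:
  assumes P: "P \<in> Iso2"
  shows "card (Lift P) = 2^((n-1)*(m-1))"
proof -
  have PF: "P \<in> F2" "P \<noteq> zv" "even (Q P)" using P by (auto simp: Iso2_def)
  have lP: "length P = m" using PF by (simp add: F2_def)
  obtain i where i: "i < 2*\<nu>" "P!i = 1" using Iso_idx[OF PF] by blast
  define p where "p = partner i"
  have pi: "p < 2*\<nu>" "partner p = i" "p \<noteq> i" using partner_props[OF i(1)] p_def by auto
  define Sw where "Sw j = (if j = p then {0} else {t\<in>{0..<qq}. t mod 2 = P!j})" for j
  define W where "W = {b. length b = m \<and> (\<forall>j<m. b!j \<in> Sw j)}"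
  have cW: "card W = 2^((n-1)*(m-1))"
  proof -
    have "card W = (\<Prod>j<m. card (Sw j))" unfolding W_def by (rule card_lists_prod)
    also have "\<dots> = card (Sw p) * (\<Prod>j\<in>{..<m}-{p}. card (Sw j))"
      using pi by (subst prod.remove[of _ p]) auto
    also have "(\<Prod>j\<in>{..<m}-{p}. card (Sw j)) = (\<Prod>j\<in>{..<m}-{p}. 2^(n-1))"
    proof (rule prod.cong)
      fix j assume j: "j \<in> {..<m}-{p}"
      then have "P!j = 0 \<or> P!j = 1" using F2_nth[OF PF(1)] by auto
      then show "card (Sw j) = 2^(n-1)" using j card_res[OF n1] by (simp add: Sw_def)
    qed simp
    also have "\<dots> = (2^(n-1))^(m-1)" using pi by simp
    finally show ?thesis by (simp add: Sw_def power_mult)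
  qed
  have bij: "bij_betw (\<lambda>a. a[p:=0]) (Lift P) W"
  proof (rule bij_betw_imageI)
    show "inj_on (\<lambda>a. a[p:=0]) (Lift P)"
    proof (rule inj_onI)
      fix a a' assume a: "a \<in> Lift P" and a': "a' \<in> Lift P" and e: "a[p:=0] = a'[p:=0]"
      have la: "length a = m" and la': "length a' = m" using a a' by (auto simp: Lift_def Zl_def)
      have same: "a!k = a'!k" if "k < m" "k \<noteq> p" for k
        using arg_cong[OF e, of "\<lambda>x. x!k"] that la la' by simp
      have ai: "a!i = a'!i" using same pi i by simp
      have "a!i mod 2 = 1" using a i la by (auto simp: Lift_def red_nth dest: arg_cong[of _ _ "\<lambda>x. x!i"])
      then have oi: "odd (a!i)" by (simp add: odd_iff_mod_2_eq_one)
      have q1: "Q a = Q (a[p:=0]) + a!p * a!i" using Q_upd[OF la i(1) p_def, of "a!p"] by simp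
      have q2: "Q a' = Q (a[p:=0]) + a'!p * a!i" using Q_upd[OF la' i(1) p_def, of "a'!p"] e ai by simp
      have "Q a - Q a' = (a!p - a'!p) * a!i" unfolding q1 q2 by (simp add: algebra_simps)
      moreover have "qq dvd Q a" "qq dvd Q a'" using a a' by (auto simp: Lift_def dvd_eq_mod_eq_0)
      ultimately have "qq dvd (a!p - a'!p) * a!i" by (metis dvd_diff)
      moreover have "coprime qq (a!i)" using oi by simp
      ultimately have d: "qq dvd (a!p - a'!p)" using coprime_dvd_mult_left_iff by blast
      have "p < m" using pi by simp
      then have r: "0 \<le> a!p \<and> a!p < qq" "0 \<le> a'!p \<and> a'!p < qq"
        using a a' Zl_nth by (auto simp: Lift_def)
      have "a!p - a'!p = 0" using d r dvd_imp_le_int[of "a!p - a'!p" qq] qq_ge2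
        by (cases "a!p - a'!p = 0") auto
      then have ap: "a!p = a'!p" by simp
      show "a = a'"
      proof (rule nth_equalityI)
        show "length a = length a'" using la la' by simp
      next
        fix k assume "k < length a"
        then show "a!k = a'!k" using same[of k] ap la by (cases "k = p") auto
      qed
    qed
  next
    show "(\<lambda>a. a[p:=0]) ` Lift P = W"
    proof (rule set_eqI, rule iffI)
      fix b assume "b \<in> (\<lambda>a. a[p:=0]) ` Lift P"
      then obtain a where a: "a \<in> Lift P" "b = a[p:=0]" by blast
      have la: "length a = m" using a by (auto simp: Lift_def Zl_def)
      have "b!j \<in> Sw j" if j: "j < m" for j
      proof (cases "j = p")
        case True then show ?thesis using a la j by (simp add: Sw_def)
      next
        case False
        have "a!j mod 2 = P!j" using a(1) j la by (auto simp: Lift_def red_nth dest: arg_cong[of _ _ "\<lambda>x. x!j"])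
        then show ?thesis using False a Zl_nth[of a j] j by (auto simp: Sw_def Lift_def)
      qed
      then show "b \<in> W" using la a by (simp add: W_def)
    next
      fix b assume b: "b \<in> W"
      have lb: "length b = m" using b by (simp add: W_def)
      have bj: "b!j \<in> Sw j" if "j < m" for j using b that by (simp add: W_def)
      have bp: "b!p = 0" using bj[of p] pi by (simp add: Sw_def)
      have bi: "b!i mod 2 = 1" using bj[of i] pi i by (simp add: Sw_def)
      then obtain u where u: "(b!i * u) mod qq = 1" using odd_inv[of "b!i" n] n1 by (auto simp: odd_iff_mod_2_eq_one)
      define t where "t = (- Q b * u) mod qq"
      define a where "a = b[p:=t]"
      have la: "length a = m" using lb by (simp add: a_def)
      have ab: "a[p:=0] = b" using bp list_update_id[of b p] by (simp add: a_def)
      have b0: "b[p:=0] = b" using bp list_update_id[of b p] by simp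
      have Qa: "Q a = Q b + t * b!i"
        using Q_upd[OF lb i(1) p_def, of t] unfolding b0 a_def .
      have tr: "0 \<le> t \<and> t < qq" using qq_ge2 by (simp add: t_def)
      have "t mod qq = (- Q b * u) mod qq" using tr by (simp add: t_def)
      then have d1: "qq dvd t + Q b * u" using mod_eq_dvd_iff[of t qq "- Q b * u"] by simp
      have "(b!i * u) mod qq = 1 mod qq" using u n1 by simp
      then have "qq dvd b!i * u - 1" using mod_eq_dvd_iff by blast
      then have d2: "qq dvd 1 - b!i * u" by (metis dvd_minus_iff minus_diff_eq)
      have eq: "Q a = (t + Q b*u)*b!i + Q b*(1 - b!i*u)" unfolding Qa by (simp add: algebra_simps)
      have e1: "qq dvd (t + Q b*u)*b!i" using d1 by (rule dvd_mult2)
      have e2: "qq dvd Q b*(1 - b!i*u)" using d2 by (rule dvd_mult)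
      have "qq dvd Q a" unfolding eq using e1 e2 by (rule dvd_add)
      then have Qa0: "Q a mod qq = 0" by simp
      have "Q b mod 2 = Q (P[p:=0]) mod 2"
      proof (rule Q_cong, intro allI impI)
        fix j assume j: "j < m"
        show "b!j mod 2 = P[p:=0]!j mod 2"
        proof (cases "j = p")
          case True then show ?thesis using bp lP pi(1) by simp
        next
          case False then show ?thesis using bj[OF j] lP F2_nth[OF PF(1) j] by (auto simp: Sw_def)
        qed
      qed
      then have m1: "(Q b + P!p) mod 2 = (Q (P[p:=0]) + P!p) mod 2" by (metis mod_add_left_eq)
      have "Q P = Q (P[p:=0]) + P!p" using Q_upd[OF lP i(1) p_def, of "P!p"] i by simp
      then have "even (Q (P[p:=0]) + P!p)" using PF(3) by simp
      then have e4: "even (Q b + P!p)" using m1 by (simp add: even_iff_mod_2_eq_zero)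
      have "qq dvd Q a" using Qa0 by (simp add: dvd_eq_mod_eq_0)
      then have e5: "even (Q b + t * b!i)" using dvd2 Qa by (metis dvd_trans)
      have "even ((Q b + t * b!i) - (Q b + P!p))" using dvd_diff[OF e5 e4] .
      moreover have "(Q b + t * b!i) - (Q b + P!p) = (t - P!p) + t * (b!i - 1)" by (simp add: algebra_simps)
      moreover have "even (b!i - 1)" using bi by (simp add: odd_iff_mod_2_eq_one)
      ultimately have "even (t - P!p)" by simp
      then have "t mod 2 = P!p mod 2" by (simp add: mod_eq_dvd_iff)
      moreover have "P!p = 0 \<or> P!p = 1" using F2_nth[OF PF(1)] pi by simp
      ultimately have tp: "t mod 2 = P!p" by auto
      have "a \<in> Zl"
      proof -
        have "set a \<subseteq> {0..<qq}"
        proof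
          fix x assume "x \<in> set a"
          then obtain j where j: "j < m" "x = a!j" using la by (auto simp: in_set_conv_nth)
          show "x \<in> {0..<qq}"
          proof (cases "j = p")
            case True then show ?thesis using j tr lb by (simp add: a_def)
          next
            case False then show ?thesis using j bj[OF j(1)] lb by (auto simp: a_def Sw_def)
          qed
        qed
        then show ?thesis using la by (simp add: Zl_def)
      qed
      moreover have "red a = P"
      proof (rule nth_equalityI)
        show "length (red a) = length P" using la lP by simp
      next
        fix j assume "j < length (red a)"
        then have j: "j < m" using la by simp
        show "red a ! j = P ! j"
        proof (cases "j = p")
          case True then show ?thesis using j tp lb by (simp add: a_def red_nth)
        next
          case False then show ?thesis using j bj[OF j] lb by (auto simp: a_def Sw_def red_nth)
        qed
      qed
      ultimately have "a \<in> Lift P" using Qa0 by (simp add: Lift_def)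
      then show "b \<in> (\<lambda>a. a[p:=0]) ` Lift P" using ab by force
    qed
  qed
  show ?thesis using bij_betw_same_card[OF bij] cW by simp
qed

end

context og
begin

abbreviation "V \<equiv> Overts n \<nu> \<delta> z"

definition GV :: "int list set" where
  "GV = {a\<in>Zl. (\<exists>i<m. odd (a!i)) \<and> Q a mod qq = 0}"

lemma V_eq: "V = (\<lambda>a. cls qq a) ` GV"
  unfolding Overts_def GV_def Vtuples_def Zl_def Q_def using zunit_iff by auto

lemma red_F2: "a \<in> Zl \<Longrightarrow> red a \<in> F2"
proof -
  have m2: "\<forall>t::int. t mod 2 = 0 \<or> t mod 2 = 1" by presburger
  assume "a \<in> Zl" then show ?thesis using m2 by (auto simp: F2_def Zl_def red_def)
qed

lemma Q_red_mod2: "length a = m \<Longrightarrow> Q (red a) mod 2 = Q a mod 2"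
  by (rule Q_cong) (simp add: red_nth)

lemma Bs_red_mod2: "length a = m \<Longrightarrow> length b = m \<Longrightarrow> Bs (red a) (red b) mod 2 = Bs a b mod 2"
  by (rule Bs_cong) (simp_all add: red_nth)

lemma GV_red: "a \<in> GV \<Longrightarrow> red a \<in> Iso2"
proof -
  assume a: "a \<in> GV"
  have aZ: "a \<in> Zl" and la: "length a = m" using a by (auto simp: GV_def Zl_def)
  obtain i where i: "i < m" "odd (a!i)" using a by (auto simp: GV_def)
  have "red a ! i = 1" using i la by (simp add: red_nth odd_iff_mod_2_eq_one)
  then have "red a \<noteq> zv" using i zv_nth by auto
  moreover have "qq dvd Q a" using a by (simp add: GV_def dvd_eq_mod_eq_0)
  then have "even (Q a)" using dvd2 dvd_trans by blast
  then have "even (Q (red a))" using Q_red_mod2[OF la] by (simp add: even_iff_mod_2_eq_zero)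
  ultimately show ?thesis using red_F2[OF aZ] by (simp add: Iso2_def)
qed

lemma Lift_GV: "P \<in> Iso2 \<Longrightarrow> a \<in> Lift P \<Longrightarrow> a \<in> GV"
proof -
  assume P: "P \<in> Iso2" and a: "a \<in> Lift P"
  have PF: "P \<in> F2" "P \<noteq> zv" "even (Q P)" using P by (auto simp: Iso2_def)
  obtain i where i: "i < 2*\<nu>" "P!i = 1" using Iso_idx[OF PF] by blast
  have la: "length a = m" using a by (auto simp: Lift_def Zl_def)
  have "red a ! i = 1" using a i by (auto simp: Lift_def)
  then have "odd (a!i)" using i la by (simp add: red_nth odd_iff_mod_2_eq_one)
  moreover have "i < m" using i by simp
  ultimately show ?thesis using a by (auto simp: GV_def Lift_def)
qed

lemma GV_Lift: "a \<in> GV \<Longrightarrow> a \<in> Lift (red a)"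
  by (auto simp: GV_def Lift_def)

lemma Q_scale_mod: "a \<in> Zl \<Longrightarrow> Q (scale qq l a) mod qq = (l^2 * Q a) mod qq"
proof -
  assume a: "a \<in> Zl"
  have la: "length a = m" using a by (simp add: Zl_def)
  have "Q (scale qq l a) mod qq = Q (smul l a) mod qq"
    by (rule Q_cong) (simp add: scale_nth smul_nth la)
  then show ?thesis using Q_smul[OF la] by simp
qed

lemma cls_GV: "a \<in> GV \<Longrightarrow> b \<in> cls qq a \<Longrightarrow> b \<in> GV \<and> red b = red a"
proof -
  assume a: "a \<in> GV" and b: "b \<in> cls qq a"
  obtain l where l: "l \<in> Uq" "b = scale qq l a" using b unfolding cls_Uq by blast
  have aZ: "a \<in> Zl" using a by (simp add: GV_def)
  have rb: "red b = red a" using l red_scale by (simp add: Uq_def)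
  have "Q b mod qq = (l^2 * Q a) mod qq" using Q_scale_mod[OF aZ] l by simp
  also have "\<dots> = 0" using a by (simp add: GV_def mod_mult_right_eq[symmetric])
  finally have "Q b mod qq = 0" .
  moreover have "b \<in> Zl" using scale_Zl[OF aZ] l by simp
  ultimately have "b \<in> Lift (red a)" using rb by (simp add: Lift_def)
  then have "b \<in> GV" using Lift_GV GV_red[OF a] by blast
  then show ?thesis using rb by simp
qed

definition redc :: "int list set \<Rightarrow> int list" where "redc A = red (SOME a. a \<in> A)"

lemma redc_cls: "a \<in> GV \<Longrightarrow> redc (cls qq a) = red a"
proof -
  assume a: "a \<in> GV"
  have "a \<in> cls qq a" using a self_cls by (simp add: GV_def)
  then have "(SOME b. b \<in> cls qq a) \<in> cls qq a" by (rule someI)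
  then show ?thesis using cls_GV[OF a] by (simp add: redc_def)
qed

lemma V_redc: "A \<in> V \<Longrightarrow> redc A \<in> Iso2"
  using V_eq redc_cls GV_red by auto

lemma V_mem: "A \<in> V \<Longrightarrow> a \<in> A \<Longrightarrow> a \<in> GV \<and> red a = redc A"
  using V_eq redc_cls cls_GV by auto

lemma V_ne: "A \<in> V \<Longrightarrow> \<exists>a. a \<in> A"
  using V_eq self_cls by (auto simp: GV_def)

lemma Oadj_iff:
  assumes "A \<in> V" "B \<in> V"
  shows "Oadj n \<nu> \<delta> z A B \<longleftrightarrow> odd (Bs (redc A) (redc B))"
proof -
  have key: "odd (Bs a b) \<longleftrightarrow> odd (Bs (redc A) (redc B))" if "a \<in> A" "b \<in> B" for a b
  proof -
    have a: "a \<in> GV" "red a = redc A" using V_mem[OF assms(1) that(1)] by auto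
    have b: "b \<in> GV" "red b = redc B" using V_mem[OF assms(2) that(2)] by auto
    have "length a = m" "length b = m" using a b by (auto simp: GV_def Zl_def)
    then have "Bs (redc A) (redc B) mod 2 = Bs a b mod 2" using Bs_red_mod2 a b by metis
    then show ?thesis by (simp add: odd_iff_mod_2_eq_one)
  qed
  obtain a b where "a \<in> A" "b \<in> B" using V_ne assms by blast
  then show ?thesis unfolding Oadj_def Bs_def[symmetric] zunit_iff using key by blast
qed

definition Fib :: "int list \<Rightarrow> int list set set" where "Fib P = {A\<in>V. redc A = P}"

lemma Fib_eq: "P \<in> Iso2 \<Longrightarrow> Fib P = (\<lambda>a. cls qq a) ` Lift P"
proof (rule set_eqI, rule iffI)
  fix A assume P: "P \<in> Iso2" and "A \<in> Fib P"
  then have A: "A \<in> V" "redc A = P" by (auto simp: Fib_def)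
  then obtain a where a: "a \<in> GV" "A = cls qq a" using V_eq by auto
  then have "red a = P" using A redc_cls by simp
  then have "a \<in> Lift P" using GV_Lift[OF a(1)] by simp
  then show "A \<in> (\<lambda>a. cls qq a) ` Lift P" using a by blast
next
  fix A assume P: "P \<in> Iso2" and "A \<in> (\<lambda>a. cls qq a) ` Lift P"
  then obtain a where a: "a \<in> Lift P" "A = cls qq a" by blast
  have aG: "a \<in> GV" using Lift_GV[OF P a(1)] .
  then have "A \<in> V" using V_eq a by auto
  moreover have "redc A = P" using a aG redc_cls by (auto simp: Lift_def)
  ultimately show "A \<in> Fib P" by (simp add: Fib_def)
qed

lemma Lift_finite: "finite (Lift P)"
  using Zl_finite by (simp add: Lift_def)

lemma Fib_card:
  assumes P: "P \<in> Iso2"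
  shows "card (Fib P) = 2^((n-1)*(m-2))"
proof -
  let ?C = "Fib P"
  have fin: "finite ?C" using Fib_eq[OF P] Lift_finite by simp
  have U: "\<Union>?C = Lift P"
  proof
    show "\<Union>?C \<subseteq> Lift P"
    proof
      fix b assume "b \<in> \<Union>?C"
      then obtain a where a: "a \<in> Lift P" "b \<in> cls qq a" using Fib_eq[OF P] by auto
      have aG: "a \<in> GV" using Lift_GV[OF P a(1)] .
      then have "b \<in> GV" "red b = red a" using cls_GV a(2) by auto
      then show "b \<in> Lift P" using GV_Lift a(1) by (auto simp: Lift_def)
    qed
  next
    show "Lift P \<subseteq> \<Union>?C"
    proof
      fix a assume a: "a \<in> Lift P"
      then have "a \<in> cls qq a" using self_cls by (simp add: Lift_def)
      then show "a \<in> \<Union>?C" using a Fib_eq[OF P] by auto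
    qed
  qed
  have cc: "\<forall>c\<in>?C. card c = 2^(n-1)"
  proof
    fix c assume "c \<in> ?C"
    then obtain a where a: "a \<in> Lift P" "c = cls qq a" using Fib_eq[OF P] by auto
    have aG: "a \<in> GV" using Lift_GV[OF P a(1)] .
    then obtain i where "i < m" "odd (a!i)" by (auto simp: GV_def)
    then show "card c = 2^(n-1)" using cls_card aG a by (auto simp: GV_def)
  qed
  have dj: "\<forall>c1\<in>?C. \<forall>c2\<in>?C. c1 \<noteq> c2 \<longrightarrow> c1 \<inter> c2 = {}"
  proof (intro ballI impI)
    fix c1 c2 assume c1: "c1 \<in> ?C" and c2: "c2 \<in> ?C" and ne: "c1 \<noteq> c2"
    obtain a1 where a1: "a1 \<in> Lift P" "c1 = cls qq a1" using c1 Fib_eq[OF P] by auto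
    obtain a2 where a2: "a2 \<in> Lift P" "c2 = cls qq a2" using c2 Fib_eq[OF P] by auto
    show "c1 \<inter> c2 = {}"
    proof (rule ccontr)
      assume "c1 \<inter> c2 \<noteq> {}"
      then obtain b where b: "b \<in> cls qq a1" "b \<in> cls qq a2" using a1 a2 by auto
      have z: "a1 \<in> Zl" "a2 \<in> Zl" using a1 a2 by (auto simp: Lift_def)
      have e1: "cls qq b = cls qq a1" using cls_eq[OF z(1) b(1)] .
      have e2: "cls qq b = cls qq a2" using cls_eq[OF z(2) b(2)] .
      show False using ne a1(2) a2(2) e1 e2 by simp
    qed
  qed
  have fU: "finite (\<Union>?C)" using U Lift_finite by simp
  have "2^(n-1) * card ?C = card (\<Union>?C)"
    by (rule card_partition) (use fin fU cc dj in auto)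
  also have "\<dots> = card (Lift P)" using U by simp
  also have "\<dots> = 2^((n-1)*(m-1))" using Lift_card[OF P] .
  also have "\<dots> = 2^(n-1) * 2^((n-1)*(m-2))"
  proof -
    have "m - 1 = Suc (m - 2)" using nu1 by simp
    then have "(n-1)*(m-1) = (n-1) + (n-1)*(m-2)" by simp
    then show ?thesis by (simp add: power_add)
  qed
  finally show ?thesis by simp
qed

lemma Fib_finite: "P \<in> Iso2 \<Longrightarrow> finite (Fib P)"
  using Fib_eq Lift_finite by simp

lemma count_V:
  assumes "J \<subseteq> Iso2"
  shows "card {A\<in>V. redc A \<in> J} = card J * 2^((n-1)*(m-2))"
proof -
  have e: "{A\<in>V. redc A \<in> J} = (\<Union>P\<in>J. Fib P)" by (auto simp: Fib_def)
  have fJ: "finite J" using assms Iso2_finite finite_subset by blast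
  have "card (\<Union>P\<in>J. Fib P) = (\<Sum>P\<in>J. card (Fib P))"
    by (rule card_UN_disjoint) (use fJ assms Fib_finite in \<open>auto simp: Fib_def\<close>)
  also have "\<dots> = (\<Sum>P\<in>J. 2^((n-1)*(m-2)))" using assms Fib_card by (intro sum.cong) auto
  finally show ?thesis unfolding e by simp
qed

end

context og
begin

abbreviation "ff \<equiv> (2::nat)^((n-1)*(m-2))"
abbreviation "adj \<equiv> Oadj n \<nu> \<delta> z"

lemma V_all: "{A\<in>V. redc A \<in> Iso2} = V" using V_redc by auto

lemma J1: "finite V" "card V = card Iso2 * ff"
proof -
  show "card V = card Iso2 * ff" using count_V[of Iso2] V_all by simp
  have "V = (\<lambda>a. cls qq a) ` GV" by (rule V_eq)
  moreover have "finite GV" using Zl_finite by (simp add: GV_def)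
  ultimately show "finite V" by simp
qed

lemma J2: "A \<in> V \<Longrightarrow> B \<in> V \<Longrightarrow> adj A B = adj B A"
  using Oadj_iff Bs_sym by metis

lemma J3: "A \<in> V \<Longrightarrow> \<not> adj A A"
proof -
  assume A: "A \<in> V"
  have "Bs (redc A) (redc A) = 2 * Q (redc A)" unfolding Bs_split Q_def by simp
  then show ?thesis using Oadj_iff[OF A A] by simp
qed

lemma nbr_set: "A \<in> V \<Longrightarrow> {w\<in>V. adj A w} = {w\<in>V. redc w \<in> {R\<in>Iso2. odd (Bs (redc A) R)}}"
  using Oadj_iff V_redc by auto

lemma common_set: "A \<in> V \<Longrightarrow> B \<in> V \<Longrightarrow> {w\<in>V. adj A w \<and> adj B w}
   = {w\<in>V. redc w \<in> {R\<in>Iso2. odd (Bs (redc A) R) \<and> odd (Bs (redc B) R)}}"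
  using Oadj_iff V_redc by auto

lemma m2: "m \<ge> 2" using nu1 by simp

lemma J4: "A \<in> V \<Longrightarrow> card {w\<in>V. adj A w} = 2^(m-2) * ff"
proof -
  assume A: "A \<in> V"
  have "4 * int (card {R\<in>Iso2. odd (Bs (redc A) R)}) = 2^m" using G2[OF V_redc[OF A]] .
  moreover have "(2::int)^m = 4 * 2^(m-2)"
  proof -
    obtain k where "m = k + 2" using m2 by (metis le_add_diff_inverse2)
    then show ?thesis by simp
  qed
  ultimately have "card {R\<in>Iso2. odd (Bs (redc A) R)} = 2^(m-2)" by simp
  then show ?thesis unfolding nbr_set[OF A] by (subst count_V) auto
qed

lemma J5: "A \<in> V \<Longrightarrow> B \<in> V \<Longrightarrow> adj A B \<Longrightarrow> 8 * int (common_nbrs V adj A B) = (2^m - 2*S) * ff"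
proof -
  assume A: "A \<in> V" and B: "B \<in> V" and ab: "adj A B"
  have o: "odd (Bs (redc A) (redc B))" using Oadj_iff[OF A B] ab by simp
  have ne: "redc A \<noteq> redc B"
  proof
    assume "redc A = redc B"
    then have "Bs (redc A) (redc B) = 2 * Q (redc A)" unfolding Bs_split Q_def by simp
    then show False using o by simp
  qed
  have "8 * int (card {R\<in>Iso2. odd (Bs (redc A) R) \<and> odd (Bs (redc B) R)}) = 2^m - S + chi (Bs (redc A) (redc B)) * S"
    by (rule G3[OF V_redc[OF A] V_redc[OF B] ne])
  also have "chi (Bs (redc A) (redc B)) = -1" using o by (simp add: chi_def)
  finally have e: "8 * int (card {R\<in>Iso2. odd (Bs (redc A) R) \<and> odd (Bs (redc B) R)}) = 2^m - 2*S" by simp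
  have "common_nbrs V adj A B = card {R\<in>Iso2. odd (Bs (redc A) R) \<and> odd (Bs (redc B) R)} * ff"
    unfolding common_nbrs_def common_set[OF A B] by (subst count_V) auto
  then have "8 * int (common_nbrs V adj A B) = (8 * int (card {R\<in>Iso2. odd (Bs (redc A) R) \<and> odd (Bs (redc B) R)})) * int ff"
    by (simp only: of_nat_mult mult.assoc)
  then show ?thesis unfolding e by simp
qed

lemma J6: "A \<in> V \<Longrightarrow> B \<in> V \<Longrightarrow> redc A = redc B \<Longrightarrow> common_nbrs V adj A B = 2^(m-2) * ff"
proof -
  assume A: "A \<in> V" and B: "B \<in> V" and e: "redc A = redc B"
  have "{w\<in>V. adj A w \<and> adj B w} = {w\<in>V. adj A w}" using Oadj_iff[OF A] Oadj_iff[OF B] e by auto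
  then show ?thesis unfolding common_nbrs_def using J4[OF A] by simp
qed

lemma J7: "A \<in> V \<Longrightarrow> B \<in> V \<Longrightarrow> \<not> adj A B \<Longrightarrow> redc A \<noteq> redc B \<Longrightarrow> 8 * int (common_nbrs V adj A B) = 2^m * ff"
proof -
  assume A: "A \<in> V" and B: "B \<in> V" and ab: "\<not> adj A B" and ne: "redc A \<noteq> redc B"
  have o: "even (Bs (redc A) (redc B))" using Oadj_iff[OF A B] ab by simp
  have "8 * int (card {R\<in>Iso2. odd (Bs (redc A) R) \<and> odd (Bs (redc B) R)}) = 2^m - S + chi (Bs (redc A) (redc B)) * S"
    by (rule G3[OF V_redc[OF A] V_redc[OF B] ne])
  also have "chi (Bs (redc A) (redc B)) = 1" using o by (simp add: chi_def)
  finally have e: "8 * int (card {R\<in>Iso2. odd (Bs (redc A) R) \<and> odd (Bs (redc B) R)}) = 2^m" by simp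
  have "common_nbrs V adj A B = card {R\<in>Iso2. odd (Bs (redc A) R) \<and> odd (Bs (redc B) R)} * ff"
    unfolding common_nbrs_def common_set[OF A B] by (subst count_V) auto
  then have "8 * int (common_nbrs V adj A B) = (8 * int (card {R\<in>Iso2. odd (Bs (redc A) R) \<and> odd (Bs (redc B) R)})) * int ff"
    by (simp only: of_nat_mult mult.assoc)
  then show ?thesis unfolding e by simp
qed

lemma card_Iso2: "int (card Iso2) = (2^\<nu> - 1) * (2^(\<nu>+\<delta>-1) + 1)"
proof -
  define A :: int where "A = 2^\<nu>"
  define B :: int where "B = 2^(\<nu>+\<delta>-1)"
  have h1: "(2::int)^m = A * (2*B)"
  proof -
    have "(2::int)^m = 2^\<nu> * 2^(\<nu>+\<delta>)" by (simp add: power_add[symmetric] mult_2)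
    moreover have "(2::int)^(\<nu>+\<delta>) = 2 * B" unfolding B_def using nu1
      by (metis Suc_diff_1 add_gr_0 less_le_trans zero_less_one power_Suc)
    ultimately show ?thesis by (simp add: A_def)
  qed
  have h2: "A * 2^\<delta> = 2 * B"
  proof -
    have "(2::int)^(\<nu>+\<delta>) = 2 * B" unfolding B_def using nu1
      by (metis Suc_diff_1 add_gr_0 less_le_trans zero_less_one power_Suc)
    then show ?thesis by (simp add: A_def power_add)
  qed
  have h3: "sd = 2 - 2^\<delta>" using d012 by (auto simp: sd_def)
  have "A * sd = A * (2 - 2^\<delta>)" using h3 by simp
  also have "\<dots> = 2*A - A*2^\<delta>" by (simp add: algebra_simps)
  also have "\<dots> = 2*A - 2*B" using h2 by simp
  finally have "A * sd = 2*A - 2*B" .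
  moreover have "2 * int (card Iso2) + 2 = 2^m + S" by (rule G1)
  ultimately have "2 * int (card Iso2) + 2 = 2*(A*B) + 2*A - 2*B" unfolding S_val h1 A_def[symmetric]
    by (simp add: algebra_simps)
  then have "int (card Iso2) = A*B + A - B - 1" by linarith
  then show ?thesis unfolding A_def[symmetric] B_def[symmetric] by (simp add: algebra_simps)
qed

lemma J8:
  assumes "\<nu> = 1" "A \<in> V" "B \<in> V" "\<not> adj A B"
  shows "redc A = redc B"
proof (rule ccontr)
  assume ne: "redc A \<noteq> redc B"
  let ?P = "redc A"
  have P: "?P \<in> Iso2" using V_redc assms by simp
  have "4 * int (card {R\<in>Iso2. odd (Bs ?P R)}) = 2^m" using G2[OF P] .
  moreover have "(2::int)^m = 4 * 2^\<delta>" using assms(1) by (simp add: power_add)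
  ultimately have "int (card {R\<in>Iso2. odd (Bs ?P R)}) = int (2^\<delta>)" by simp
  then have c1: "card {R\<in>Iso2. odd (Bs ?P R)} = 2^\<delta>" by (simp only: of_nat_eq_iff)
  have "int (card Iso2) = 2^\<delta> + 1" using card_Iso2 assms(1) by simp
  then have "int (card Iso2) = int (2^\<delta> + 1)" by simp
  then have "card Iso2 = 2^\<delta> + 1" by (simp only: of_nat_eq_iff)
  then have c2: "card (Iso2 - {?P}) = 2^\<delta>" using P Iso2_finite by simp
  have sub: "{R\<in>Iso2. odd (Bs ?P R)} \<subseteq> Iso2 - {?P}"
  proof
    fix R assume R: "R \<in> {R\<in>Iso2. odd (Bs ?P R)}"
    have "Bs ?P ?P = 2 * Q ?P" unfolding Bs_split Q_def by simp
    then show "R \<in> Iso2 - {?P}" using R by auto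
  qed
  have "{R\<in>Iso2. odd (Bs ?P R)} = Iso2 - {?P}"
    by (rule card_subset_eq[OF _ sub]) (use Iso2_finite c1 c2 in auto)
  moreover have "redc B \<in> Iso2 - {?P}" using V_redc assms ne by auto
  ultimately have "odd (Bs ?P (redc B))" by blast
  then show False using Oadj_iff assms by simp
qed

lemma J9:
  assumes "ff = 1" "A \<in> V" "B \<in> V" "redc A = redc B"
  shows "A = B"
proof -
  have P: "redc A \<in> Iso2" using V_redc assms by simp
  have "card (Fib (redc A)) = 1" using Fib_card[OF P] assms(1) by simp
  moreover have "A \<in> Fib (redc A)" "B \<in> Fib (redc A)" using assms by (auto simp: Fib_def)
  ultimately show ?thesis by (metis card_1_singletonE singletonD)
qed

end

lemma pow2_powr: "(2::real) powr (real a) = 2^a" by (simp add: powr_realpow)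

context og
begin

lemma S_int: "S = 2^\<nu> * (2 - 2^\<delta>)" using S_val d012 by (auto simp: sd_def)

lemma ff_real: "real ff = 2^((n-1)*(m-2))" by simp

lemma k_eq: "(2::real)^(m-2) * 2^((n-1)*(m-2)) = 2^(n*(m-2))"
proof -
  have "(m-2) + (n-1)*(m-2) = n*(m-2)" using n1 by (cases n) auto
  then show ?thesis by (metis power_add)
qed

lemma regular: "regular_graph V adj
           (2^((n-1)*(2*\<nu>+\<delta>-2)) * (2^\<nu> - 1) * (2^(\<nu>+\<delta>-1) + 1))
           (2^(n*(2*\<nu>+\<delta>-2)))"
proof -
  have cI: "real (card Iso2) = (2^\<nu> - 1) * (2^(\<nu>+\<delta>-1) + 1)"
  proof -
    have "real (card Iso2) = real_of_int (int (card Iso2))" by simp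
    also have "\<dots> = (2^\<nu> - 1) * (2^(\<nu>+\<delta>-1) + 1)" unfolding card_Iso2 by simp
    finally show ?thesis .
  qed
  have "real (card V) = 2^((n-1)*(2*\<nu>+\<delta>-2)) * (2^\<nu> - 1) * (2^(\<nu>+\<delta>-1) + 1)"
    unfolding J1(2) of_nat_mult cI by simp
  moreover have "\<forall>x\<in>V. real (card {w\<in>V. adj x w}) = 2^(n*(2*\<nu>+\<delta>-2))"
    using J4 k_eq by simp
  ultimately show ?thesis unfolding regular_graph_def using J1(1) J2 J3 by blast
qed

end

context og
begin

lemma common_adj_int:
  assumes "A \<in> V" "B \<in> V" "adj A B"
  shows "8 * int (common_nbrs V adj A B) = ((2::int)^m - 2*2^\<nu>*(2 - 2^\<delta>)) * int ff"
  using J5[OF assms] S_int by (simp add: mult.assoc)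

lemma srg:
  assumes nu: "\<nu> = 1"
  shows "strongly_regular V adj
             (2^((n-1)*(2*\<nu>+\<delta>-2)) * (2^\<nu> - 1) * (2^(\<nu>+\<delta>-1) + 1))
             (2^(n*(2*\<nu>+\<delta>-2)))
             (2^(\<delta>*n) - 2^(\<delta>*(n-1)))
             (of_int \<lceil>real \<delta> / 2\<rceil> * 2^(\<delta>*n))"
proof -
  have md: "m - 2 = \<delta>" using nu by simp
  have en: "\<delta> + (n-1)*\<delta> = \<delta>*n" using n1 by (cases n) (auto simp: algebra_simps)
  have lam: "real (common_nbrs V adj x y) = 2^(\<delta>*n) - 2^(\<delta>*(n-1))" if xy: "x \<in> V" "y \<in> V" "adj x y" for x y
  proof -
    have "8 * int (common_nbrs V adj x y) = ((2::int)^m - 2*2^\<nu>*(2 - 2^\<delta>)) * int ff" by (rule common_adj_int[OF xy])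
    also have "(2::int)^m - 2*2^\<nu>*(2 - 2^\<delta>) = 8 * (2^\<delta> - 1)" using nu by (simp add: power_add algebra_simps)
    finally have "8 * int (common_nbrs V adj x y) = 8 * ((2^\<delta> - 1) * int ff)" by (simp only: mult.assoc)
    then have "int (common_nbrs V adj x y) = (2^\<delta> - 1) * int ff" by simp
    then have "real_of_int (int (common_nbrs V adj x y)) = real_of_int ((2^\<delta> - 1) * int ff)" by simp
    then have "real (common_nbrs V adj x y) = (2^\<delta> - 1) * 2^((n-1)*\<delta>)" unfolding md by simp
    also have "\<dots> = 2^(\<delta> + (n-1)*\<delta>) - 2^((n-1)*\<delta>)" by (simp add: power_add algebra_simps)
    finally show ?thesis unfolding en by (simp add: mult.commute)
  qed
  have mu: "real (common_nbrs V adj x y) = of_int \<lceil>real \<delta> / 2\<rceil> * 2^(\<delta>*n)"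
    if xy: "x \<in> V" "y \<in> V" "x \<noteq> y" "\<not> adj x y" for x y
  proof -
    have e: "redc x = redc y" using J8[OF nu xy(1,2,4)] .
    have d0: "\<delta> \<noteq> 0"
    proof
      assume "\<delta> = 0"
      then have "ff = 1" using md by simp
      then show False using J9[OF _ xy(1,2) e] xy(3) by simp
    qed
    have h12: "\<lceil>(1::real) / 2\<rceil> = 1" by (simp add: ceiling_eq_iff)
    have c: "\<lceil>real \<delta> / 2\<rceil> = 1" using d0 d012 h12 by auto
    have "common_nbrs V adj x y = 2^(m-2) * ff" using J6[OF xy(1,2) e] .
    then have "real (common_nbrs V adj x y) = 2^\<delta> * 2^((n-1)*\<delta>)" unfolding md by simp
    also have "\<dots> = 2^(\<delta>*n)" unfolding en[symmetric] by (simp add: power_add)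
    finally show ?thesis using c by simp
  qed
  show ?thesis unfolding strongly_regular_def using regular lam mu by blast
qed

end

lemma pp: "(2::real)^a * 2^b = 2^(a+b)" by (simp add: power_add)

lemma lam_d0:
  assumes "n \<ge> 1" "\<nu> \<ge> 2"
  shows "(2::real)^(n-1) * (2 powr (real n * (real \<nu> + real (0::nat) / 2 - 1))
           + (real (0::nat) - 1) * 2 powr ((real n - 1) * (real \<nu> + real (0::nat) / 2 - 1)))
         * 2 powr (real n * (real \<nu> - 2 + real (0::nat) / 2))
       = (2^(2*\<nu>-3) - 2^(\<nu>-2)) * 2^((n-1)*(2*\<nu>+0-2))"
proof -
  obtain j where n: "n = Suc j" using assms(1) by (cases n) auto
  obtain k where v: "\<nu> = Suc (Suc k)" using assms(2) by (metis add_2_eq_Suc le_Suc_ex)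
  have e1: "real n * (real \<nu> + real (0::nat) / 2 - 1) = real ((j+1)*(k+1))" by (simp add: n v algebra_simps)
  have e2: "(real n - 1) * (real \<nu> + real (0::nat) / 2 - 1) = real (j*(k+1))" by (simp add: n v algebra_simps)
  have e3: "real n * (real \<nu> - 2 + real (0::nat) / 2) = real ((j+1)*k)" by (simp add: n v algebra_simps)
  have a: "(2::real)^j * 2^((j+1)*(k+1)) * 2^((j+1)*k) = 2^(2*k+1) * 2^(j*(2*k+2))"
    unfolding pp by (simp add: algebra_simps)
  have b: "(2::real)^j * 2^(j*(k+1)) * 2^((j+1)*k) = 2^k * 2^(j*(2*k+2))"
    unfolding pp by (simp add: algebra_simps)
  show ?thesis unfolding e1 e2 e3 powr_realpow[OF zero_less_numeral[where 'a=real]]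
    using a b by (simp add: n v algebra_simps)
qed

lemma lam_d1:
  assumes "n \<ge> 1" "\<nu> \<ge> 2"
  shows "(2::real)^(n-1) * (2 powr (real n * (real \<nu> + real (1::nat) / 2 - 1))
           + (real (1::nat) - 1) * 2 powr ((real n - 1) * (real \<nu> + real (1::nat) / 2 - 1)))
         * 2 powr (real n * (real \<nu> - 2 + real (1::nat) / 2))
       = 2^(2*\<nu>-2) * 2^((n-1)*(2*\<nu>+1-2))"
proof -
  obtain j where n: "n = Suc j" using assms(1) by (cases n) auto
  obtain k where v: "\<nu> = Suc (Suc k)" using assms(2) by (metis add_2_eq_Suc le_Suc_ex)
  have "2 powr (real n * (real \<nu> + real (1::nat) / 2 - 1)) * 2 powr (real n * (real \<nu> - 2 + real (1::nat) / 2))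
      = (2::real) powr (real n * (real \<nu> + real (1::nat) / 2 - 1) + real n * (real \<nu> - 2 + real (1::nat) / 2))"
    by (simp add: powr_add)
  also have "real n * (real \<nu> + real (1::nat) / 2 - 1) + real n * (real \<nu> - 2 + real (1::nat) / 2) = real ((j+1)*(2*k+2))"
    by (simp add: n v field_simps)
  finally have e0: "2 powr (real n * (real \<nu> + real (1::nat) / 2 - 1)) * 2 powr (real n * (real \<nu> - 2 + real (1::nat) / 2))
      = (2::real) powr real ((j+1)*(2*k+2))" .
  have e: "2 powr (real n * (real \<nu> + real (1::nat) / 2 - 1)) * 2 powr (real n * (real \<nu> - 2 + real (1::nat) / 2))
      = (2::real)^((j+1)*(2*k+2))" using e0 unfolding powr_realpow[OF zero_less_numeral[where 'a=real]] .
  have a: "(2::real)^j * 2^((j+1)*(2*k+2)) = 2^(2*k+2) * 2^(j*(2*k+3))"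
    unfolding pp by (simp add: algebra_simps)
  show ?thesis using e a by (simp add: n v algebra_simps)
qed

lemma lam_d2:
  assumes "n \<ge> 1" "\<nu> \<ge> 2"
  shows "(2::real)^(n-1) * (2 powr (real n * (real \<nu> + real (2::nat) / 2 - 1))
           + (real (2::nat) - 1) * 2 powr ((real n - 1) * (real \<nu> + real (2::nat) / 2 - 1)))
         * 2 powr (real n * (real \<nu> - 2 + real (2::nat) / 2))
       = (2^(2*\<nu>-1) + 2^(\<nu>-1)) * 2^((n-1)*(2*\<nu>+2-2))"
proof -
  obtain j where n: "n = Suc j" using assms(1) by (cases n) auto
  obtain k where v: "\<nu> = Suc (Suc k)" using assms(2) by (metis add_2_eq_Suc le_Suc_ex)
  have e1: "real n * (real \<nu> + real (2::nat) / 2 - 1) = real ((j+1)*(k+2))" by (simp add: n v algebra_simps)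
  have e2: "(real n - 1) * (real \<nu> + real (2::nat) / 2 - 1) = real (j*(k+2))" by (simp add: n v algebra_simps)
  have e3: "real n * (real \<nu> - 2 + real (2::nat) / 2) = real ((j+1)*(k+1))" by (simp add: n v algebra_simps)
  have a: "(2::real)^j * 2^((j+1)*(k+2)) * 2^((j+1)*(k+1)) = 2^(2*k+3) * 2^(j*(2*k+4))"
    unfolding pp by (rule arg_cong[where f="\<lambda>e. (2::real)^e"]) (simp add: algebra_simps)
  have b: "(2::real)^j * 2^(j*(k+2)) * 2^((j+1)*(k+1)) = 2^(k+1) * 2^(j*(2*k+4))"
    unfolding pp by (rule arg_cong[where f="\<lambda>e. (2::real)^e"]) (simp add: algebra_simps)
  show ?thesis unfolding e1 e2 e3 powr_realpow[OF zero_less_numeral[where 'a=real]]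
    using a b by (simp add: n v algebra_simps power_add)
qed


context og
begin

lemma adj_real:
  assumes "A \<in> V" "B \<in> V" "adj A B" "(2::int)^m - 2*2^\<nu>*(2 - 2^\<delta>) = 8 * X"
  shows "real (common_nbrs V adj A B) = real_of_int X * 2^((n-1)*(m-2))"
proof -
  have "8 * int (common_nbrs V adj A B) = 8 * (X * int ff)"
    using common_adj_int[OF assms(1-3)] assms(4) by simp
  then have "int (common_nbrs V adj A B) = X * int ff" by simp
  then have "real_of_int (int (common_nbrs V adj A B)) = real_of_int (X * int ff)" by simp
  then show ?thesis by simp
qed

lemma qsrg:
  assumes nu2: "\<nu> \<ge> 2"
  shows "quasi_strongly_regular V adj
             (2^((n-1)*(2*\<nu>+\<delta>-2)) * (2^\<nu> - 1) * (2^(\<nu>+\<delta>-1) + 1))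
             (2^(n*(2*\<nu>+\<delta>-2)))
             (2^(n-1) * (2 powr (real n * (real \<nu> + real \<delta> / 2 - 1))
                         + (real \<delta> - 1) * 2 powr ((real n - 1) * (real \<nu> + real \<delta> / 2 - 1)))
                      * 2 powr (real n * (real \<nu> - 2 + real \<delta> / 2)))
             {2^(n-1) * 2^(n*(2*\<nu>-3+\<delta>)), 2^(n*(2*\<nu>-2+\<delta>))}"
proof -
  obtain k where v: "\<nu> = Suc (Suc k)" using nu2 by (metis add_2_eq_Suc le_Suc_ex)
  have em3: "2*\<nu>-3+\<delta> = m - 3" using nu2 by simp
  have em2: "2*\<nu>-2+\<delta> = m - 2" using nu2 by simp
  let ?lam = "(2::real)^(n-1) * (2 powr (real n * (real \<nu> + real \<delta> / 2 - 1))
                         + (real \<delta> - 1) * 2 powr ((real n - 1) * (real \<nu> + real \<delta> / 2 - 1)))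
                      * 2 powr (real n * (real \<nu> - 2 + real \<delta> / 2))"
  have lam: "real (common_nbrs V adj x y) = ?lam" if xy: "x \<in> V" "y \<in> V" "adj x y" for x y
  proof -
    consider "\<delta> = 0" | "\<delta> = 1" | "\<delta> = 2" using d012 by blast
    then show ?thesis
    proof cases
      case 1
      have "(2::int)^m - 2*2^\<nu>*(2 - 2^\<delta>) = 8 * (2^(2*\<nu>-3) - 2^(\<nu>-2))"
        using 1 v by (simp add: power_add algebra_simps)
      then have "real (common_nbrs V adj x y) = real_of_int (2^(2*\<nu>-3) - 2^(\<nu>-2)) * 2^((n-1)*(m-2))"
        by (rule adj_real[OF xy])
      moreover have "?lam = (2^(2*\<nu>-3) - 2^(\<nu>-2)) * 2^((n-1)*(2*\<nu>+0-2))"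
        using lam_d0[OF n1 nu2] 1 by simp
      ultimately show ?thesis using 1 by simp
    next
      case 2
      have "(2::int)^m - 2*2^\<nu>*(2 - 2^\<delta>) = 8 * (2^(2*\<nu>-2))"
        using 2 v by (simp add: power_add algebra_simps)
      then have "real (common_nbrs V adj x y) = real_of_int (2^(2*\<nu>-2)) * 2^((n-1)*(m-2))"
        by (rule adj_real[OF xy])
      moreover have "?lam = 2^(2*\<nu>-2) * 2^((n-1)*(2*\<nu>+1-2))"
        using lam_d1[OF n1 nu2] 2 by simp
      ultimately show ?thesis using 2 by simp
    next
      case 3
      have "(2::int)^m - 2*2^\<nu>*(2 - 2^\<delta>) = 8 * (2^(2*\<nu>-1) + 2^(\<nu>-1))"
        using 3 v by (simp add: power_add algebra_simps)
      then have "real (common_nbrs V adj x y) = real_of_int (2^(2*\<nu>-1) + 2^(\<nu>-1)) * 2^((n-1)*(m-2))"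
        by (rule adj_real[OF xy])
      moreover have "?lam = (2^(2*\<nu>-1) + 2^(\<nu>-1)) * 2^((n-1)*(2*\<nu>+2-2))"
        using lam_d2[OF n1 nu2] 3 by simp
      ultimately show ?thesis using 3 by simp
    qed
  qed
  have c1: "real (common_nbrs V adj x y) = 2^(n-1) * 2^(n*(2*\<nu>-3+\<delta>))"
    if xy: "x \<in> V" "y \<in> V" "\<not> adj x y" "redc x \<noteq> redc y" for x y
  proof -
    have "8 * int (common_nbrs V adj x y) = 2^m * ff" using J7[OF xy] .
    moreover have "(2::int)^m = 8 * 2^(m-3)" using v by (simp add: power_add)
    ultimately have "int (common_nbrs V adj x y) = 2^(m-3) * int ff" by simp
    then have "real_of_int (int (common_nbrs V adj x y)) = real_of_int (2^(m-3) * int ff)" by simp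
    then have "real (common_nbrs V adj x y) = 2^(m-3) * 2^((n-1)*(m-2))" by simp
    also have "\<dots> = 2^((m-3) + (n-1)*(m-2))" by (simp add: power_add)
    also have "(m-3) + (n-1)*(m-2) = (n-1) + n*(m-3)"
    proof -
      obtain j where n: "n = Suc j" using n1 by (cases n) auto
      have "m - 2 = Suc (2*k+1+\<delta>)" "m - 3 = 2*k+1+\<delta>" using v by simp_all
      then show ?thesis by (simp add: n algebra_simps)
    qed
    finally show ?thesis unfolding em3 by (simp add: power_add)
  qed
  have c2: "real (common_nbrs V adj x y) = 2^(n*(2*\<nu>-2+\<delta>))"
    if xy: "x \<in> V" "y \<in> V" "redc x = redc y" for x y
  proof -
    have "common_nbrs V adj x y = 2^(m-2) * ff" using J6[OF xy] .
    then have "real (common_nbrs V adj x y) = 2^(m-2) * 2^((n-1)*(m-2))" by simp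
    then show ?thesis unfolding em2 k_eq .
  qed
  have ne: "(2::real)^(n-1) * 2^(n*(2*\<nu>-3+\<delta>)) \<noteq> 2^(n*(2*\<nu>-2+\<delta>))"
  proof
    assume "(2::real)^(n-1) * 2^(n*(2*\<nu>-3+\<delta>)) = 2^(n*(2*\<nu>-2+\<delta>))"
    then have "(2::real)^((n-1) + n*(2*\<nu>-3+\<delta>)) = 2^(n*(2*\<nu>-2+\<delta>))" by (simp add: power_add)
    then have "(n-1) + n*(2*\<nu>-3+\<delta>) = n*(2*\<nu>-2+\<delta>)" by (simp add: power_inject_exp)
    moreover have "n*(2*\<nu>-2+\<delta>) = n + n*(2*\<nu>-3+\<delta>)" using v by (simp add: algebra_simps)
    ultimately have "(n-1) + n*(2*\<nu>-3+\<delta>) = n + n*(2*\<nu>-3+\<delta>)" by (rule trans)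
    then show False using n1 by linarith
  qed
  show ?thesis unfolding quasi_strongly_regular_def
  proof (intro conjI ballI impI)
    show "regular_graph V adj
           (2^((n-1)*(2*\<nu>+\<delta>-2)) * (2^\<nu> - 1) * (2^(\<nu>+\<delta>-1) + 1)) (2^(n*(2*\<nu>+\<delta>-2)))"
      by (rule regular)
  next
    show "finite {(2::real)^(n-1) * 2^(n*(2*\<nu>-3+\<delta>)), 2^(n*(2*\<nu>-2+\<delta>))}" by simp
  next
    show "2 \<le> card {(2::real)^(n-1) * 2^(n*(2*\<nu>-3+\<delta>)), 2^(n*(2*\<nu>-2+\<delta>))}" using ne by simp
  next
    fix x y assume "x \<in> V" "y \<in> V" "adj x y"
    then show "real (common_nbrs V adj x y) = ?lam" by (rule lam)
  next
    fix x y assume xy: "x \<in> V" "y \<in> V" "x \<noteq> y \<and> \<not> adj x y"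
    show "real (common_nbrs V adj x y) \<in> {2^(n-1) * 2^(n*(2*\<nu>-3+\<delta>)), 2^(n*(2*\<nu>-2+\<delta>))}"
      using c1[of x y] c2[of x y] xy by (cases "redc x = redc y") auto
  qed
qed

end

theorem theorem2p3:
  fixes n \<nu> \<delta> :: nat and z :: int
  assumes "n \<ge> 1" and "\<nu> \<ge> 1" and "\<delta> \<le> 2"
    and "0 \<le> z" and "z < 2^n" and "zunit (2^n) z"
  shows "regular_graph (Overts n \<nu> \<delta> z) (Oadj n \<nu> \<delta> z)
           (2^((n-1)*(2*\<nu>+\<delta>-2)) * (2^\<nu> - 1) * (2^(\<nu>+\<delta>-1) + 1))
           (2^(n*(2*\<nu>+\<delta>-2)))
       \<and> (\<nu> = 1 \<longrightarrow>
           strongly_regular (Overts n \<nu> \<delta> z) (Oadj n \<nu> \<delta> z)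
             (2^((n-1)*(2*\<nu>+\<delta>-2)) * (2^\<nu> - 1) * (2^(\<nu>+\<delta>-1) + 1))
             (2^(n*(2*\<nu>+\<delta>-2)))
             (2^(\<delta>*n) - 2^(\<delta>*(n-1)))
             (of_int \<lceil>real \<delta> / 2\<rceil> * 2^(\<delta>*n)))
       \<and> (\<nu> \<ge> 2 \<longrightarrow>
           quasi_strongly_regular (Overts n \<nu> \<delta> z) (Oadj n \<nu> \<delta> z)
             (2^((n-1)*(2*\<nu>+\<delta>-2)) * (2^\<nu> - 1) * (2^(\<nu>+\<delta>-1) + 1))
             (2^(n*(2*\<nu>+\<delta>-2)))
             (2^(n-1) * (2 powr (real n * (real \<nu> + real \<delta> / 2 - 1))
                         + (real \<delta> - 1) * 2 powr ((real n - 1) * (real \<nu> + real \<delta> / 2 - 1)))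
                      * 2 powr (real n * (real \<nu> - 2 + real \<delta> / 2)))
             {2^(n-1) * 2^(n*(2*\<nu>-3+\<delta>)), 2^(n*(2*\<nu>-2+\<delta>))})"
proof -
  have zo: "odd z" using assms(6) zunit_odd[OF assms(1)] by simp
  interpret og n \<nu> \<delta> z using assms zo by unfold_locales auto
  show ?thesis using regular srg qsrg by blast
qed

end
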